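(* Let $G$ be a connected non-complete graph and let $V_1,V_2$ be a partition of $V(G)$ such that $N_G(u)=V_2$ for all $u\in V_1$. Let $v\in V_1$, and let $\widetilde G_v$ be the graph obtained from $G$ by adding a new vertex $v'$ whose neighbourhood is exactly $N_G(v)$ (a false twin of $v$). Then $\chi(\mathcal{R}(\widetilde G_v))=\chi(\mathcal{R}(G))$.
   Context: For a connected graph $G$, a search tree on $G$ is a rooted tree with vertex set $V(G)$ defined recursively: its root is some vertex $r\in V(G)$, and the children of $r$ are the roots of search trees on the connected components of $G-r$. For a rooted tree $T$ and $w\in V(T)$, $T|w$ denotes the subtree rooted at $w$. Let $T$ be a search tree on $G$, let $v$ be a child of $u$ in $T$, and let $p$ be the parent of $u$ (if it exists). The $uv$-rotation transforms $T$ into the search tree $T'$ in which: $u$ is a child of $v$ and $v$ is a child of $p$ (or $v$ is the root if $u$ was the root); every subtree of $u$ in $T$ other than $T|v$ is a subtree of $u$ in $T'$; and every subtree $S$ of $v$ in $T$ is a subtree of $u$ in $T'$ if $u$ is adjacent in $G$ to some vertex of $S$, and a subtree of $v$ in $T'$ otherwise. The rotation graph $\mathcal{R}(G)$ is the graph whose vertices are the search trees on $G$, two being adjacent iff they differ by one rotation. $\chi$ denotes chromatic number. *)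

theory Defs
  imports Main "HOL-Library.FSet"
begin

definition simple_graph :: "'a set \<Rightarrow> ('a \<Rightarrow> 'a \<Rightarrow> bool) \<Rightarrow> bool" where
  "simple_graph V E \<longleftrightarrow> finite V \<and> (\<forall>x y. E x y \<longrightarrow> x \<in> V \<and> y \<in> V)
     \<and> (\<forall>x y. E x y \<longrightarrow> E y x) \<and> (\<forall>x. \<not> E x x)"

definition reach_in :: "('a \<Rightarrow> 'a \<Rightarrow> bool) \<Rightarrow> 'a set \<Rightarrow> 'a \<Rightarrow> 'a \<Rightarrow> bool" where
  "reach_in E S = (\<lambda>a b. E a b \<and> a \<in> S \<and> b \<in> S)\<^sup>*\<^sup>*"

definition connected_in :: "('a \<Rightarrow> 'a \<Rightarrow> bool) \<Rightarrow> 'a set \<Rightarrow> bool" where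
  "connected_in E S \<longleftrightarrow> S \<noteq> {} \<and> (\<forall>x\<in>S. \<forall>y\<in>S. reach_in E S x y)"

definition comps :: "('a \<Rightarrow> 'a \<Rightarrow> bool) \<Rightarrow> 'a set \<Rightarrow> 'a set set" where
  "comps E S = {{y \<in> S. reach_in E S x y} | x. x \<in> S}"

definition nbhd :: "'a set \<Rightarrow> ('a \<Rightarrow> 'a \<Rightarrow> bool) \<Rightarrow> 'a \<Rightarrow> 'a set" where
  "nbhd V E u = {w \<in> V. E u w}"

datatype 'a rtree = Node 'a "'a rtree fset"

primrec root :: "'a rtree \<Rightarrow> 'a" where
  "root (Node r Ch) = r"

primrec verts :: "'a rtree \<Rightarrow> 'a set" where
  "verts (Node r Ch) = insert r (\<Union> (fset (fimage verts Ch)))"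

inductive search_tree :: "('a \<Rightarrow> 'a \<Rightarrow> bool) \<Rightarrow> 'a set \<Rightarrow> 'a rtree \<Rightarrow> bool"
  for E where
  "\<lbrakk> r \<in> S; connected_in E S;
     \<forall>t \<in> fset Ch. search_tree E (verts t) t;
     verts ` fset Ch = comps E (S - {r});
     inj_on verts (fset Ch) \<rbrakk>
   \<Longrightarrow> search_tree E S (Node r Ch)"

definition adj_set :: "('a \<Rightarrow> 'a \<Rightarrow> bool) \<Rightarrow> 'a \<Rightarrow> 'a set \<Rightarrow> bool" where
  "adj_set E u X \<longleftrightarrow> (\<exists>x\<in>X. E u x)"

text \<open>rotation E T T': T' arises from T by one uv-rotation (u a vertex, v a child of u).\<close>
inductive rotation :: "('a \<Rightarrow> 'a \<Rightarrow> bool) \<Rightarrow> 'a rtree \<Rightarrow> 'a rtree \<Rightarrow> bool"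
  for E where
  rot_root: "Node v Dv |\<in>| Ch \<Longrightarrow>
     rotation E (Node u Ch)
       (Node v (finsert
                  (Node u ((Ch |-| {|Node v Dv|}) |\<union>| ffilter (\<lambda>S. adj_set E u (verts S)) Dv))
                  (ffilter (\<lambda>S. \<not> adj_set E u (verts S)) Dv)))"
| rot_sub: "t |\<in>| Ch \<Longrightarrow> rotation E t t' \<Longrightarrow>
     rotation E (Node w Ch) (Node w (finsert t' (Ch |-| {|t|})))"

definition rot_vertices :: "'a set \<Rightarrow> ('a \<Rightarrow> 'a \<Rightarrow> bool) \<Rightarrow> 'a rtree set" where
  "rot_vertices V E = {T. search_tree E V T}"

definition rot_adj :: "('a \<Rightarrow> 'a \<Rightarrow> bool) \<Rightarrow> 'a rtree \<Rightarrow> 'a rtree \<Rightarrow> bool" where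
  "rot_adj E T T' \<longleftrightarrow> T \<noteq> T' \<and> (rotation E T T' \<or> rotation E T' T)"

definition chromatic_number :: "'b set \<Rightarrow> ('b \<Rightarrow> 'b \<Rightarrow> bool) \<Rightarrow> nat" where
  "chromatic_number X A = (LEAST k. \<exists>c :: 'b \<Rightarrow> nat.
      (\<forall>x\<in>X. c x < k) \<and> (\<forall>x\<in>X. \<forall>y\<in>X. A x y \<longrightarrow> c x \<noteq> c y))"

text \<open>Adding a false twin v' (= None) of v: vertices Some ` V plus None.\<close>
definition twin_V :: "'a set \<Rightarrow> 'a option set" where
  "twin_V V = insert None (Some ` V)"

definition twin_E :: "('a \<Rightarrow> 'a \<Rightarrow> bool) \<Rightarrow> 'a \<Rightarrow> 'a option \<Rightarrow> 'a option \<Rightarrow> bool" where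
  "twin_E E v x y = (case (x, y) of
      (Some a, Some b) \<Rightarrow> E a b
    | (None, Some b) \<Rightarrow> E v b
    | (Some a, None) \<Rightarrow> E a v
    | (None, None) \<Rightarrow> False)"

end

theory Submission
  imports Defs
begin



lemma verts_set: "verts t = set_rtree t"
  by (induction t) auto

lemma verts_map: "verts (map_rtree f t) = f ` verts t"
  by (simp add: verts_set rtree.set_map)

lemma reach_in_refl[simp]: "reach_in E X a a"
  unfolding reach_in_def by simp

lemma reach_in_edge: "E a b \<Longrightarrow> a \<in> X \<Longrightarrow> b \<in> X \<Longrightarrow> reach_in E X a b"
  unfolding reach_in_def by (rule r_into_rtranclp) simp

lemma reach_in_trans: "reach_in E X a b \<Longrightarrow> reach_in E X b c \<Longrightarrow> reach_in E X a c"
  unfolding reach_in_def by (rule rtranclp_trans)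

lemma reach_in_sym:
  assumes sym: "\<And>x y. E x y \<Longrightarrow> E y x" and r: "reach_in E X a b"
  shows "reach_in E X b a"
proof -
  have "(\<lambda>a b. E a b \<and> a \<in> X \<and> b \<in> X)\<^sup>*\<^sup>* a b" using r unfolding reach_in_def .
  then show ?thesis unfolding reach_in_def
  proof (induction rule: rtranclp_induct)
    case base then show ?case by simp
  next
    case (step y z)
    then have "(\<lambda>a b. E a b \<and> a \<in> X \<and> b \<in> X)\<^sup>*\<^sup>* z y" using sym by (intro r_into_rtranclp) auto
    then show ?case using step(3) by (rule rtranclp_trans)
  qed
qed

lemma reach_in_mem: "reach_in E X a b \<Longrightarrow> a \<noteq> b \<Longrightarrow> a \<in> X \<and> b \<in> X"
  unfolding reach_in_def
  by (induction rule: rtranclp_induct) auto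

lemma reach_in_mono: "reach_in E X a b \<Longrightarrow> X \<subseteq> Y \<Longrightarrow> reach_in E Y a b"
  unfolding reach_in_def
  by (induction rule: rtranclp_induct) (auto intro: rtranclp.rtrancl_into_rtrancl)

lemma reach_in_image:
  assumes compat: "\<And>a b. E1 a b = E2 (f a) (f b)" and r: "reach_in E1 X a b"
  shows "reach_in E2 (f ` X) (f a) (f b)"
  using r unfolding reach_in_def
proof (induction rule: rtranclp_induct)
  case base then show ?case by simp
next
  case (step y z)
  then show ?case using compat
    by (auto intro: rtranclp.rtrancl_into_rtrancl)
qed

lemma reach_in_image_rev:
  assumes compat: "\<And>a b. E1 a b = E2 (f a) (f b)" and inj: "inj_on f X"
    and r: "reach_in E2 (f ` X) (f a) w" and a: "a \<in> X"
  shows "\<forall>b\<in>X. w = f b \<longrightarrow> reach_in E1 X a b"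
  using r unfolding reach_in_def
proof (induction rule: rtranclp_induct)
  case base then show ?case using inj a by (auto dest: inj_onD)
next
  case (step y z)
  then obtain b' where b': "b' \<in> X" "y = f b'" by auto
  show ?case
  proof (intro ballI impI)
    fix b assume b: "b \<in> X" "z = f b"
    have "(\<lambda>a b. E1 a b \<and> a \<in> X \<and> b \<in> X)\<^sup>*\<^sup>* a b'" using step(3) b' by auto
    moreover have "E1 b' b" using step(2) b b' compat by auto
    ultimately show "(\<lambda>a b. E1 a b \<and> a \<in> X \<and> b \<in> X)\<^sup>*\<^sup>* a b"
      using b b' by (auto intro: rtranclp.rtrancl_into_rtrancl)
  qed
qed

lemma connected_image:
  assumes compat: "\<And>a b. E1 a b = E2 (f a) (f b)" and c: "connected_in E1 X"
  shows "connected_in E2 (f ` X)"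
  using c reach_in_image[of E1 E2 f, OF compat] unfolding connected_in_def by blast

lemma comps_sub: "C \<in> comps E X \<Longrightarrow> C \<subseteq> X"
  unfolding comps_def by auto

lemma comps_ne: "C \<in> comps E X \<Longrightarrow> C \<noteq> {}"
  unfolding comps_def by auto

lemma comps_eq:
  assumes sym: "\<And>x y. E x y \<Longrightarrow> E y x" and C: "C \<in> comps E X" and z: "z \<in> C"
  shows "C = {y \<in> X. reach_in E X z y}"
proof -
  obtain x where x: "x \<in> X" "C = {y \<in> X. reach_in E X x y}" using C unfolding comps_def by auto
  then have xz: "reach_in E X x z" using z by auto
  have zx: "reach_in E X z x" using reach_in_sym[of E, OF sym xz] .
  show ?thesis
  proof (rule set_eqI)
    fix y
    have "reach_in E X x y \<longleftrightarrow> reach_in E X z y"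
      using xz zx reach_in_trans[of E X z x y] reach_in_trans[of E X x z y] by blast
    then show "y \<in> C \<longleftrightarrow> y \<in> {y \<in> X. reach_in E X z y}" using x(2) by simp
  qed
qed

lemma comps_disj:
  assumes sym: "\<And>x y. E x y \<Longrightarrow> E y x" and "C1 \<in> comps E X" "C2 \<in> comps E X" "z \<in> C1" "z \<in> C2"
  shows "C1 = C2"
proof -
  have "C1 = {y \<in> X. reach_in E X z y}" by (rule comps_eq[of E, OF sym]) (use assms in auto)
  moreover have "C2 = {y \<in> X. reach_in E X z y}" by (rule comps_eq[of E, OF sym]) (use assms in auto)
  ultimately show ?thesis by simp
qed

lemma comp_in: "x \<in> X \<Longrightarrow> {y \<in> X. reach_in E X x y} \<in> comps E X"
  unfolding comps_def by auto

lemma Union_comps: "\<Union> (comps E X) = X"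
proof
  show "\<Union> (comps E X) \<subseteq> X" by (rule Union_least) (rule comps_sub)
  show "X \<subseteq> \<Union> (comps E X)"
  proof
    fix x assume x: "x \<in> X"
    have "x \<in> {y \<in> X. reach_in E X x y}" using x by simp
    then show "x \<in> \<Union> (comps E X)" using comp_in[OF x, of E] by (rule UnionI[rotated])
  qed
qed

lemma comps_conn: assumes "connected_in E X" shows "comps E X = {X}"
proof -
  have "{y \<in> X. reach_in E X x y} = X" if "x \<in> X" for x using assms that by (auto simp: connected_in_def)
  moreover have "X \<noteq> {}" using assms by (simp add: connected_in_def)
  ultimately show ?thesis unfolding comps_def by auto
qed

lemma comps_image:
  assumes compat: "\<And>a b. E1 a b = E2 (f a) (f b)" and inj: "inj_on f X"
  shows "comps E2 (f ` X) = (\<lambda>C. f ` C) ` comps E1 X"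
proof -
  have key: "reach_in E2 (f ` X) (f a) (f b) \<longleftrightarrow> reach_in E1 X a b" if "a \<in> X" "b \<in> X" for a b
    using reach_in_image[of E1 E2 f, OF compat] reach_in_image_rev[of E1 E2 f, OF compat inj _ that(1)] that by blast
  have "{y \<in> f ` X. reach_in E2 (f ` X) (f x) y} = f ` {y \<in> X. reach_in E1 X x y}" if "x \<in> X" for x
    using key that by auto
  note ce = this
  show ?thesis
  proof (rule set_eqI, rule iffI)
    fix C assume "C \<in> comps E2 (f ` X)"
    then obtain x where x: "x \<in> X" "C = {y \<in> f ` X. reach_in E2 (f ` X) (f x) y}"
      unfolding comps_def by blast
    then have "C = f ` {y \<in> X. reach_in E1 X x y}" using ce by simp
    then show "C \<in> (\<lambda>C. f ` C) ` comps E1 X" using comp_in[OF x(1), of E1] by blast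
  next
    fix C assume "C \<in> (\<lambda>C. f ` C) ` comps E1 X"
    then obtain x where x: "x \<in> X" "C = f ` {y \<in> X. reach_in E1 X x y}"
      unfolding comps_def by blast
    then have "C = {y \<in> f ` X. reach_in E2 (f ` X) (f x) y}" using ce by simp
    then show "C \<in> comps E2 (f ` X)" using comp_in[of "f x" "f ` X" E2] x(1) by blast
  qed
qed

lemma reach_isolated:
  assumes sym: "\<And>x y. E x y \<Longrightarrow> E y x" and iso: "\<forall>y\<in>X. \<not> E z y"
    and r: "reach_in E X a b" and a: "a \<noteq> z"
  shows "reach_in E (X - {z}) a b \<and> b \<noteq> z"
  using r unfolding reach_in_def
proof (induction rule: rtranclp_induct)
  case base then show ?case using a by simp
next
  case (step y c)
  then have "c \<noteq> z" using iso sym by auto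
  then show ?case using step by (auto intro: rtranclp.rtrancl_into_rtrancl)
qed

lemma comps_isolated:
  assumes sym: "\<And>x y. E x y \<Longrightarrow> E y x" and iso: "\<forall>y\<in>X. \<not> E z y" and z: "z \<in> X"
  shows "comps E X = insert {z} (comps E (X - {z}))"
proof -
  have rz: "reach_in E X z b \<longleftrightarrow> b = z" for b
    using reach_isolated[of E X z, OF sym iso] reach_in_sym[of E, OF sym] by (metis reach_in_refl)
  have ra: "reach_in E X a b \<longleftrightarrow> reach_in E (X - {z}) a b" if "a \<noteq> z" for a b
    using reach_isolated[of E X z, OF sym iso _ that] reach_in_mono[of E "X - {z}" a b X] by blast
  have c1: "{y \<in> X. reach_in E X z y} = {z}" using rz z by auto
  have c2: "{y \<in> X. reach_in E X a y} = {y \<in> X - {z}. reach_in E (X - {z}) a y}" if "a \<in> X" "a \<noteq> z" for a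
    using ra[OF that(2)] reach_isolated[of E X z, OF sym iso _ that(2)] by auto
  show ?thesis
  proof (rule set_eqI, rule iffI)
    fix C assume "C \<in> comps E X"
    then obtain x where x: "x \<in> X" "C = {y \<in> X. reach_in E X x y}" unfolding comps_def by blast
    show "C \<in> insert {z} (comps E (X - {z}))"
    proof (cases "x = z")
      case True then show ?thesis using x c1 by simp
    next
      case False
      then have "C = {y \<in> X - {z}. reach_in E (X - {z}) x y}" using c2 x by simp
      then show ?thesis using x False comp_in[of x "X - {z}" E] by simp
    qed
  next
    fix C assume C: "C \<in> insert {z} (comps E (X - {z}))"
    show "C \<in> comps E X"
    proof (cases "C = {z}")
      case True then show ?thesis using c1 comp_in[OF z, of E] by simp
    next
      case False
      then have "C \<in> comps E (X - {z})" using C by simp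
      then obtain x where x: "x \<in> X - {z}" "C = {y \<in> X - {z}. reach_in E (X - {z}) x y}"
        unfolding comps_def by blast
      then have "C = {y \<in> X. reach_in E X x y}" using c2[of x] by simp
      then show ?thesis using x comp_in[of x X E] by simp
    qed
  qed
qed


lemma st_verts: "search_tree E S t \<Longrightarrow> verts t = S"
proof (induction rule: search_tree.induct)
  case (1 r S Ch)
  from 1 have e: "verts ` fset Ch = comps E (S - {r})" by blast
  have u: "\<Union> (verts ` fset Ch) = S - {r}" unfolding e by (rule Union_comps)
  have "verts (Node r Ch) = insert r (\<Union> (verts ` fset Ch))" by simp
  also have "\<dots> = S" unfolding u using 1(1) by blast
  finally show ?case .
qed

lemma st_Node:
  assumes "search_tree E S (Node r Ch)"
  shows "r \<in> S" "connected_in E S" "\<And>t. t |\<in>| Ch \<Longrightarrow> search_tree E (verts t) t"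
    "verts ` fset Ch = comps E (S - {r})" "inj_on verts (fset Ch)"
proof -
  have "r \<in> S \<and> connected_in E S \<and> (\<forall>t. t |\<in>| Ch \<longrightarrow> search_tree E (verts t) t)
    \<and> verts ` fset Ch = comps E (S - {r}) \<and> inj_on verts (fset Ch)"
    using assms by (cases rule: search_tree.cases) simp
  then show "r \<in> S" "connected_in E S" "\<And>t. t |\<in>| Ch \<Longrightarrow> search_tree E (verts t) t"
    "verts ` fset Ch = comps E (S - {r})" "inj_on verts (fset Ch)" by simp_all
qed


lemma st_child_comp:
  assumes "search_tree E S (Node r Ch)" "c |\<in>| Ch"
  shows "verts c \<in> comps E (S - {r})"
proof -
  have "verts c \<in> verts ` fset Ch" using assms(2) by simp
  then show ?thesis unfolding st_Node(4)[OF assms(1)] .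
qed

lemma st_child_sub:
  assumes "search_tree E S (Node r Ch)" "c |\<in>| Ch"
  shows "verts c \<subseteq> S - {r}"
  using st_child_comp[OF assms] by (rule comps_sub)

lemma st_child_disj:
  assumes sym: "\<And>x y. E x y \<Longrightarrow> E y x" and st: "search_tree E S (Node r Ch)"
    and "c1 |\<in>| Ch" "c2 |\<in>| Ch" "z \<in> verts c1" "z \<in> verts c2"
  shows "c1 = c2"
proof -
  have "verts c1 = verts c2"
    by (rule comps_disj[where E=E and X="S - {r}" and z=z, OF sym st_child_comp[OF st assms(3)]
          st_child_comp[OF st assms(4)] assms(5) assms(6)])
  then show ?thesis using inj_onD[OF st_Node(5)[OF st]] assms(3,4) by simp
qed

lemma verts_ne: "verts t \<noteq> {}"
  by (cases t) simp

lemma st_leaf: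
  assumes "search_tree E {z} t" shows "t = Node z {||}"
proof (cases t)
  case (Node r Ch)
  have r: "r = z" using st_Node(1) assms Node by fastforce
  have "comps E ({z} - {r}) = {}" unfolding r comps_def by simp
  then have "verts ` fset Ch = {}" using st_Node(4)[of E "{z}" r Ch] assms Node by simp
  then have "Ch = {||}" by (simp add: fset_eq_iff)
  then show ?thesis using Node r by simp
qed

lemma st_single_child:
  assumes st: "search_tree E S (Node r Ch)" and c: "connected_in E (S - {r})"
  shows "\<exists>c. Ch = {|c|} \<and> verts c = S - {r}"
proof -
  have e: "verts ` fset Ch = {S - {r}}" using st_Node(4)[OF st] comps_conn[OF c] by simp
  then have "S - {r} \<in> verts ` fset Ch" by simp
  then obtain c where c1: "c |\<in>| Ch" "verts c = S - {r}" by (auto simp del: fimage.rep_eq)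
  have "d = c" if "d |\<in>| Ch" for d
  proof -
    have "verts d \<in> verts ` fset Ch" using that by simp
    then have "verts d = verts c" using e c1 by simp
    then show ?thesis using inj_onD[OF st_Node(5)[OF st]] that c1(1) by simp
  qed
  note dc = this
  have "Ch = {|c|}" unfolding fset_eq_iff
  proof
    fix x show "x |\<in>| Ch \<longleftrightarrow> x |\<in>| {|c|}" using dc[of x] c1(1) by auto
  qed
  then show ?thesis using c1 by simp
qed

lemma rotation_ne:
  assumes "rotation E t t'" "search_tree E S t"
  shows "t \<noteq> t'"
  using assms
proof (induction arbitrary: S rule: rotation.induct)
  case (rot_root v Dv Ch u)
  have "verts (Node v Dv) \<subseteq> S - {u}" using st_child_sub[OF rot_root(2,1)] .
  then have "v \<noteq> u" by simp
  then show ?case by simp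
next
  case (rot_sub t Ch t' w)
  have "t \<noteq> t'" using rot_sub(3)[OF st_Node(3)[OF rot_sub(4) rot_sub(1)]] .
  then have "t |\<notin>| finsert t' (Ch |-| {|t|})" by simp
  then have "finsert t' (Ch |-| {|t|}) \<noteq> Ch" using rot_sub(1) by metis
  then show ?case by simp
qed


lemma fimage_fminus_single:
  assumes inj: "inj_on h (fset A)" and a: "a |\<in>| A"
  shows "h |`| (A |-| {|a|}) = h |`| A |-| {|h a|}"
proof (rule fset_eqI)
  fix x
  show "x |\<in>| h |`| (A |-| {|a|}) \<longleftrightarrow> x |\<in>| h |`| A |-| {|h a|}"
  proof
    assume "x |\<in>| h |`| (A |-| {|a|})"
    then obtain y where y: "y |\<in>| A" "y \<noteq> a" "x = h y" by auto
    have "h y \<noteq> h a" using inj_onD[OF inj] y(1,2) a by metis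
    then show "x |\<in>| h |`| A |-| {|h a|}" using y by simp
  next
    assume "x |\<in>| h |`| A |-| {|h a|}"
    then obtain y where y: "y |\<in>| A" "x = h y" "x \<noteq> h a" by auto
    then have "y \<noteq> a" by auto
    then show "x |\<in>| h |`| (A |-| {|a|})" using y by simp
  qed
qed

lemma fimage_ffilter: "h |`| ffilter (\<lambda>s. P (h s)) D = ffilter P (h |`| D)"
  by (rule fset_eqI) auto

lemma map_inj_on_children:
  assumes inj: "inj_on f S" and sub: "\<And>c. c |\<in>| Ch \<Longrightarrow> verts c \<subseteq> S"
  shows "inj_on (map_rtree f) (fset Ch)"
proof (rule inj_onI)
  fix c1 c2 assume c: "c1 \<in> fset Ch" "c2 \<in> fset Ch" "map_rtree f c1 = map_rtree f c2"
  show "c1 = c2"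
  proof (rule rtree.inj_map_strong[OF _ c(3)])
    fix z za assume "z \<in> set_rtree c1" "za \<in> set_rtree c2" "f z = f za"
    then show "z = za" using sub[of c1] sub[of c2] c(1,2) inj_onD[OF inj] unfolding verts_set by blast
  qed
qed

lemma adj_set_map:
  assumes compat: "\<And>a b. E1 a b = E2 (f a) (f b)"
  shows "adj_set E2 (f u) (verts (map_rtree f s)) = adj_set E1 u (verts s)"
  unfolding adj_set_def verts_map using compat by simp

lemma st_map:
  assumes compat: "\<And>a b. E1 a b = E2 (f a) (f b)"
  shows "search_tree E1 S t \<Longrightarrow> inj_on f S \<Longrightarrow> search_tree E2 (f ` S) (map_rtree f t)"
proof (induction rule: search_tree.induct)
  case (1 r S Ch)
  have inj: "inj_on f S" by fact
  have vc: "verts ` fset Ch = comps E1 (S - {r})" by fact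
  have sub: "verts c \<subseteq> S - {r}" if "c |\<in>| Ch" for c
  proof -
    have "verts c \<in> verts ` fset Ch" using that by simp
    then show ?thesis unfolding vc by (rule comps_sub)
  qed
  have IH: "search_tree E2 (f ` verts c) (map_rtree f c)" if "c |\<in>| Ch" for c
  proof -
    have "verts c \<subseteq> S" using sub[OF that] by blast
    then have "inj_on f (verts c)" by (rule inj_on_subset[OF inj])
    then show ?thesis using "1.IH" that by blast
  qed
  show ?case unfolding rtree.map
  proof (rule search_tree.intros)
    show "f r \<in> f ` S" using "1.hyps"(1) by simp
    show "connected_in E2 (f ` S)" by (rule connected_image[of E1 E2 f, OF compat "1.hyps"(2)])
    show "\<forall>t|\<in>|map_rtree f |`| Ch. search_tree E2 (verts t) t"
    proof
      fix t assume "t |\<in>| map_rtree f |`| Ch"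
      then obtain c where c: "c |\<in>| Ch" "t = map_rtree f c" by auto
      then show "search_tree E2 (verts t) t" using IH[OF c(1)] by (simp add: verts_map)
    qed
    have "f ` S - {f r} = f ` (S - {r})"
      using inj_on_image_set_diff[OF inj, of S "{r}"] "1.hyps"(1) by simp
    then have "comps E2 (f ` S - {f r}) = (\<lambda>C. f ` C) ` comps E1 (S - {r})"
      using comps_image[of E1 E2 f, OF compat] inj_on_subset[OF inj, of "S - {r}"] by simp
    also have "\<dots> = (\<lambda>C. f ` C) ` (verts ` fset Ch)" unfolding vc ..
    also have "\<dots> = verts ` fset (map_rtree f |`| Ch)" by (auto simp: verts_map image_image)
    finally show "verts ` fset (map_rtree f |`| Ch) = comps E2 (f ` S - {f r})" by simp
    show "inj_on verts (fset (map_rtree f |`| Ch))"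
    proof (rule inj_onI)
      fix t1 t2 assume t: "t1 \<in> fset (map_rtree f |`| Ch)" "t2 \<in> fset (map_rtree f |`| Ch)" "verts t1 = verts t2"
      obtain c1 where c1: "c1 |\<in>| Ch" "t1 = map_rtree f c1" using t(1) by auto
      obtain c2 where c2: "c2 |\<in>| Ch" "t2 = map_rtree f c2" using t(2) by auto
      have "f ` verts c1 = f ` verts c2" using t(3) c1 c2 by (simp add: verts_map)
      then have "verts c1 = verts c2"
        using inj_on_image_eq_iff[OF inj] sub[OF c1(1)] sub[OF c2(1)] by blast
      then have "c1 = c2" using inj_onD[OF "1.hyps"(4)] c1(1) c2(1) by simp
      then show "t1 = t2" using c1 c2 by simp
    qed
  qed
qed

lemma rot_map:
  assumes compat: "\<And>a b. E1 a b = E2 (f a) (f b)"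
  shows "rotation E1 t t' \<Longrightarrow> search_tree E1 S t \<Longrightarrow> inj_on f S
    \<Longrightarrow> rotation E2 (map_rtree f t) (map_rtree f t')"
proof (induction arbitrary: S rule: rotation.induct)
  case (rot_root x Dx Ch u)
  let ?c = "Node x Dx"
  let ?m = "map_rtree f"
  have injm: "inj_on ?m (fset Ch)"
    using map_inj_on_children[OF rot_root.prems(2)] st_child_sub[OF rot_root.prems(1)] by blast
  have e1: "?m |`| (Ch |-| {|?c|}) = ?m |`| Ch |-| {|?m ?c|}"
    by (rule fimage_fminus_single[OF injm rot_root.hyps])
  have e2: "?m |`| ffilter (\<lambda>S. adj_set E1 u (verts S)) Dx
      = ffilter (\<lambda>S. adj_set E2 (f u) (verts S)) (?m |`| Dx)"
    using fimage_ffilter[of ?m "\<lambda>S. adj_set E2 (f u) (verts S)" Dx] adj_set_map[of E1 E2 f, OF compat]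
    by simp
  have e3: "?m |`| ffilter (\<lambda>S. \<not> adj_set E1 u (verts S)) Dx
      = ffilter (\<lambda>S. \<not> adj_set E2 (f u) (verts S)) (?m |`| Dx)"
    using fimage_ffilter[of ?m "\<lambda>S. \<not> adj_set E2 (f u) (verts S)" Dx] adj_set_map[of E1 E2 f, OF compat]
    by simp
  have mem: "Node (f x) (?m |`| Dx) |\<in>| ?m |`| Ch" using rot_root.hyps by force
  show ?case
    using rotation.rot_root[OF mem, of E2 "f u"] unfolding rtree.map fimage_finsert fimage_funion e1 e2 e3
    by simp
next
  case (rot_sub t Ch t' w)
  let ?m = "map_rtree f"
  have injm: "inj_on ?m (fset Ch)"
    using map_inj_on_children[OF rot_sub.prems(2)] st_child_sub[OF rot_sub.prems(1)] by blast
  have st: "search_tree E1 (verts t) t" using st_Node(3)[OF rot_sub.prems(1) rot_sub.hyps(1)] .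
  have "inj_on f (verts t)"
    using inj_on_subset[OF rot_sub.prems(2)] st_child_sub[OF rot_sub.prems(1) rot_sub.hyps(1)] by blast
  then have r: "rotation E2 (?m t) (?m t')" using rot_sub.IH st by blast
  have e1: "?m |`| (Ch |-| {|t|}) = ?m |`| Ch |-| {|?m t|}"
    by (rule fimage_fminus_single[OF injm rot_sub.hyps(1)])
  have mem: "?m t |\<in>| ?m |`| Ch" using rot_sub.hyps(1) by simp
  show ?case
    using rotation.rot_sub[OF mem r, of "f w"] unfolding rtree.map fimage_finsert e1 by simp
qed


definition un :: "'a \<Rightarrow> 'a option \<Rightarrow> 'a" where
  "un v x = (case x of None \<Rightarrow> v | Some y \<Rightarrow> y)"

lemma un_simps[simp]: "un v None = v" "un v (Some y) = y"
  by (simp_all add: un_def)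

lemma st_conn: "search_tree E S t \<Longrightarrow> connected_in E S"
  by (cases t) (auto dest: st_Node(2))

locale fam =
  fixes V :: "'a set" and E :: "'a \<Rightarrow> 'a \<Rightarrow> bool" and V1 V2 :: "'a set" and v :: 'a
  assumes sg: "simple_graph V E" and connV: "connected_in E V"
    and part1: "V1 \<union> V2 = V" and part2: "V1 \<inter> V2 = {}" and ne2: "V2 \<noteq> {}"
    and nb: "\<forall>u\<in>V1. nbhd V E u = V2" and vV1: "v \<in> V1"
begin

abbreviation "Gt \<equiv> twin_E E v"
abbreviation "Vt \<equiv> twin_V V"
abbreviation "tok \<equiv> {None, Some v}"
definition "Aa = insert None (Some ` V1)"
definition "Bb = Some ` V2"

lemma E_sym: "E x y \<Longrightarrow> E y x" using sg unfolding simple_graph_def by blast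
lemma E_irr: "\<not> E x x" using sg unfolding simple_graph_def by blast
lemma E_V: "E x y \<Longrightarrow> x \<in> V \<and> y \<in> V" using sg unfolding simple_graph_def by blast
lemma finV: "finite V" using sg unfolding simple_graph_def by blast

lemma E_V1: assumes "u \<in> V1" "w \<in> V" shows "E u w \<longleftrightarrow> w \<in> V2"
proof -
  have "nbhd V E u = V2" using nb assms(1) by blast
  then show ?thesis using assms(2) unfolding nbhd_def by blast
qed

lemma vV: "v \<in> V" using vV1 part1 by blast

lemma Gt_un: "Gt x y = E (un v x) (un v y)"
  unfolding twin_E_def by (cases x; cases y) (simp_all add: E_irr)

lemma Gt_sym: "Gt x y \<Longrightarrow> Gt y x" unfolding Gt_un by (rule E_sym)
lemma Gt_irr: "\<not> Gt x x" unfolding Gt_un by (rule E_irr)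

lemma un_Vt: "x \<in> Vt \<Longrightarrow> un v x \<in> V"
  unfolding twin_V_def using vV by auto

lemma un_image_Vt: "un v ` Vt = V"
proof
  show "un v ` Vt \<subseteq> V" using un_Vt by blast
  show "V \<subseteq> un v ` Vt"
  proof
    fix x assume "x \<in> V"
    then have "Some x \<in> Vt" unfolding twin_V_def by simp
    then show "x \<in> un v ` Vt" by (metis image_eqI un_simps(2))
  qed
qed

lemma Vt_cases: "x \<in> Vt \<Longrightarrow> x \<in> Aa \<or> x \<in> Bb"
  unfolding twin_V_def Aa_def Bb_def using part1 by auto

lemma AB_disj: "x \<in> Aa \<Longrightarrow> x \<notin> Bb"
  unfolding Aa_def Bb_def using part2 by auto

lemma tok_A: "None \<in> Aa" "Some v \<in> Aa"
  unfolding Aa_def using vV1 by auto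

lemma un_A: "x \<in> Aa \<Longrightarrow> un v x \<in> V1"
  unfolding Aa_def using vV1 by auto

lemma un_B: "x \<in> Bb \<Longrightarrow> un v x \<in> V2"
  unfolding Bb_def by auto

lemma V1V: "V1 \<subseteq> V" and V2V: "V2 \<subseteq> V" using part1 by auto

lemma Gt_AB: "x \<in> Aa \<Longrightarrow> y \<in> Bb \<Longrightarrow> Gt x y"
  unfolding Gt_un using E_V1 un_A un_B V2V by blast

lemma Gt_AA: "x \<in> Aa \<Longrightarrow> y \<in> Aa \<Longrightarrow> \<not> Gt x y"
  unfolding Gt_un using E_V1 un_A V1V part2 by blast

lemma Gt_A_nb: "x \<in> Aa \<Longrightarrow> y \<in> Vt \<Longrightarrow> Gt x y \<Longrightarrow> y \<in> Bb"
  using Gt_AA Vt_cases by blast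

lemma un_eq: "un v x = un v y \<Longrightarrow> x = y \<or> (x \<in> tok \<and> y \<in> tok)"
  by (cases x; cases y) auto

lemma un_inj: "\<not> tok \<subseteq> X \<Longrightarrow> inj_on (un v) X"
  by (rule inj_onI) (use un_eq in blast)

lemma conn_AB:
  assumes X: "X \<subseteq> Vt" and a: "a \<in> X" "a \<in> Aa" and b: "b \<in> X" "b \<in> Bb"
  shows "connected_in Gt X"
proof -
  have toa: "reach_in Gt X y a" if y: "y \<in> X" for y
  proof -
    have "y \<in> Aa \<or> y \<in> Bb" using y X Vt_cases by blast
    then show ?thesis
    proof
      assume yA: "y \<in> Aa"
      have "reach_in Gt X y b" by (rule reach_in_edge) (use Gt_AB[OF yA b(2)] y b in auto)
      moreover have "reach_in Gt X b a" by (rule reach_in_edge) (use Gt_AB[OF a(2) b(2)] Gt_sym a b in auto)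
      ultimately show ?thesis by (rule reach_in_trans)
    next
      assume yB: "y \<in> Bb"
      show ?thesis by (rule reach_in_edge) (use Gt_AB[OF a(2) yB] Gt_sym a y in auto)
    qed
  qed
  show ?thesis unfolding connected_in_def
  proof (intro conjI ballI)
    show "X \<noteq> {}" using a by blast
    fix x y assume "x \<in> X" "y \<in> X"
    show "reach_in Gt X x y"
      using toa[OF \<open>x \<in> X\<close>] reach_in_sym[of Gt, OF Gt_sym toa[OF \<open>y \<in> X\<close>]] by (rule reach_in_trans)
  qed
qed

lemma reach_A_B:
  assumes X: "X \<subseteq> Vt" and a: "a \<in> Aa" and r: "reach_in Gt X a z" and ne: "z \<noteq> a"
  shows "\<exists>b\<in>X. b \<in> Bb"
proof -
  have "(\<lambda>x y. Gt x y \<and> x \<in> X \<and> y \<in> X)\<^sup>*\<^sup>* a z" using r unfolding reach_in_def .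
  then show ?thesis
  proof (cases rule: converse_rtranclpE)
    case base then show ?thesis using ne by simp
  next
    case (step y)
    then have "Gt a y" "y \<in> X" by auto
    then have "y \<in> Bb" using Gt_A_nb[OF a] X by blast
    then show ?thesis using \<open>y \<in> X\<close> by blast
  qed
qed

lemma S2:
  assumes st: "search_tree Gt S (Node r Ch)" and S: "S \<subseteq> Vt" and T: "tok \<subseteq> S" and r: "r \<in> tok"
  shows "\<exists>c. Ch = {|c|} \<and> verts c = S - {r}"
proof -
  obtain ot where ot: "ot \<in> tok" "ot \<noteq> r" using r by auto
  have oS: "ot \<in> S" using ot T by blast
  have rS: "r \<in> S" using r T by blast
  have rA: "r \<in> Aa" and oA: "ot \<in> Aa" using r ot tok_A by auto
  have "reach_in Gt S r ot" using st_conn[OF st] rS oS unfolding connected_in_def by blast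
  then obtain b where b: "b \<in> S" "b \<in> Bb" using reach_A_B[OF S rA] ot(2) by metis
  have "b \<noteq> r" using b(2) AB_disj rA by blast
  then have "connected_in Gt (S - {r})"
    using conn_AB[of "S - {r}" ot b] S oS ot(2) oA b by blast
  then show ?thesis by (rule st_single_child[OF st])
qed

lemma S1:
  assumes st: "search_tree Gt S (Node r Ch)" and S: "S \<subseteq> Vt" and T: "tok \<subseteq> S" and r: "r \<notin> tok"
  shows "(\<exists>c. Ch = {|c|} \<and> verts c = S - {r}) \<or> (Node None {||} |\<in>| Ch \<and> Node (Some v) {||} |\<in>| Ch)"
proof (cases "reach_in Gt (S - {r}) None (Some v)")
  case True
  have X: "S - {r} \<subseteq> Vt" using S by blast
  obtain b where b: "b \<in> S - {r}" "b \<in> Bb" using reach_A_B[OF X tok_A(1) True] by blast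
  have "connected_in Gt (S - {r})"
    using conn_AB[OF X, of "Some v" b] T r tok_A(2) b by blast
  then show ?thesis using st_single_child[OF st] by blast
next
  case False
  let ?X = "S - {r}"
  have X: "?X \<subseteq> Vt" using S by blast
  have leaf: "Node a {||} |\<in>| Ch" if a: "a \<in> tok" for a
  proof -
    have aX: "a \<in> ?X" using a T r by blast
    have aA: "a \<in> Aa" using a tok_A by blast
    have "{y \<in> ?X. reach_in Gt ?X a y} = {a}"
    proof (rule ccontr)
      assume "{y \<in> ?X. reach_in Gt ?X a y} \<noteq> {a}"
      then obtain y where y: "y \<in> ?X" "reach_in Gt ?X a y" "y \<noteq> a" using aX by auto
      obtain b where b: "b \<in> ?X" "b \<in> Bb" using reach_A_B[OF X aA y(2) y(3)] by blast
      have "connected_in Gt ?X" using conn_AB[OF X aX aA b] .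
      then have "reach_in Gt ?X None (Some v)" using T r unfolding connected_in_def by blast
      then show False using False by simp
    qed
    then have "{a} \<in> comps Gt ?X" using comp_in[OF aX, of Gt] by simp
    then have "{a} \<in> verts ` fset Ch" using st_Node(4)[OF st] by simp
    then obtain c where c: "c |\<in>| Ch" "verts c = {a}" by (auto simp del: fimage.rep_eq)
    have "search_tree Gt {a} c" using st_Node(3)[OF st c(1)] c(2) by simp
    then have "c = Node a {||}" by (rule st_leaf)
    then show ?thesis using c(1) by simp
  qed
  show ?thesis using leaf[of None] leaf[of "Some v"] by simp
qed

end


definition flip3 :: "nat \<Rightarrow> nat" where "flip3 n = (if n = 0 then 0 else 3 - n)"

primrec gp :: "'a \<Rightarrow> 'a option rtree \<Rightarrow> 'a rtree" where
  "gp v (Node r Ch) = (if r \<in> {None, Some v} \<and> {None, Some v} \<subseteq> verts (Node r Ch)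
      then the_elem (fset (fimage (gp v) Ch)) else Node (un v r) (fimage (gp v) Ch))"

primrec hh :: "'a \<Rightarrow> 'a option rtree \<Rightarrow> nat" where
  "hh v (Node r Ch) = (if \<not> {None, Some v} \<subseteq> verts (Node r Ch) then 0
     else if r \<in> {None, Some v} then (if r = None then 2 else 1)
     else flip3 (Max (insert 0 (fset (fimage (hh v) Ch)))))"

lemma gp_map: "\<not> {None, Some v} \<subseteq> verts t \<Longrightarrow> gp v t = map_rtree (un v) t"
proof (induction t)
  case (Node r Ch)
  have "gp v c = map_rtree (un v) c" if "c |\<in>| Ch" for c
  proof -
    have "verts c \<subseteq> verts (Node r Ch)" using that by auto
    then have "\<not> {None, Some v} \<subseteq> verts c" using Node.prems by blast
    then show ?thesis using Node.IH that by blast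
  qed
  then have e: "gp v |`| Ch = map_rtree (un v) |`| Ch" by (intro fimage_cong) auto
  have c: "\<not> (r \<in> {None, Some v} \<and> {None, Some v} \<subseteq> verts (Node r Ch))" using Node.prems by blast
  show ?case unfolding gp.simps if_not_P[OF c] e by simp
qed

lemma hh0: "\<not> {None, Some v} \<subseteq> verts t \<Longrightarrow> hh v t = 0"
  by (cases t) simp

lemma gp_nontok: assumes "r \<notin> {None, Some v}"
  shows "gp v (Node r Ch) = Node (un v r) (gp v |`| Ch)"
proof -
  have c: "\<not> (r \<in> {None, Some v} \<and> {None, Some v} \<subseteq> verts (Node r Ch))" using assms by blast
  show ?thesis unfolding gp.simps if_not_P[OF c] ..
qed

lemma gp_tok: assumes "r \<in> {None, Some v}" "{None, Some v} \<subseteq> verts (Node r Ch)"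
  shows "gp v (Node r Ch) = the_elem (fset (gp v |`| Ch))"
proof -
  have c: "r \<in> {None, Some v} \<and> {None, Some v} \<subseteq> verts (Node r Ch)" using assms by blast
  show ?thesis unfolding gp.simps if_P[OF c] ..
qed

lemma hh_tok: assumes "r \<in> {None, Some v}" "{None, Some v} \<subseteq> verts (Node r Ch)"
  shows "hh v (Node r Ch) = (if r = None then 2 else 1)"
  using assms by simp

lemma hh_nontok: assumes "r \<notin> {None, Some v}" "{None, Some v} \<subseteq> verts (Node r Ch)"
  shows "hh v (Node r Ch) = flip3 (Max (insert 0 (fset (hh v |`| Ch))))"
proof -
  have c: "\<not> \<not> {None, Some v} \<subseteq> verts (Node r Ch)" using assms by blast
  have d: "r \<notin> {None, Some v}" using assms by blast
  show ?thesis unfolding hh.simps if_not_P[OF c] if_not_P[OF d] ..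
qed

lemma map_leaf: "map_rtree f (Node a {||}) = Node (f a) {||}" by simp

context fam
begin

lemma G2:
  "search_tree Gt S t \<Longrightarrow> S \<subseteq> Vt \<Longrightarrow> tok \<subseteq> S \<Longrightarrow> search_tree E (un v ` S) (gp v t)"
proof (induction rule: search_tree.induct)
  case (1 r S Ch)
  have st: "search_tree Gt S (Node r Ch)"
    by (rule search_tree.intros) (use "1.hyps" "1.IH" in auto)
  have S: "S \<subseteq> Vt" and T: "tok \<subseteq> S" by fact+
  have compat: "\<And>a b. Gt a b = E (un v a) (un v b)" by (rule Gt_un)
  show ?case
  proof (cases "r \<in> tok")
    case True
    obtain c where c: "Ch = {|c|}" "verts c = S - {r}" using S2[OF st S T True] by blast
    have nt: "\<not> tok \<subseteq> verts c" using c(2) True by blast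
    have g: "gp v (Node r Ch) = map_rtree (un v) c"
      using gp_tok[OF True, of Ch] T c gp_map[OF nt] by (simp add: st_verts[OF st])
    have stc: "search_tree Gt (verts c) c" using st_Node(3)[OF st] c(1) by simp
    have "search_tree E (un v ` verts c) (map_rtree (un v) c)"
      by (rule st_map[of Gt E "un v", OF compat stc un_inj[OF nt]])
    moreover have "un v ` verts c = un v ` S"
    proof -
      obtain ot where ot: "ot \<in> tok" "ot \<noteq> r" using True by auto
      have "un v ot = un v r" using ot True by auto
      moreover have "ot \<in> S - {r}" using ot T by blast
      ultimately have m: "un v r \<in> un v ` (S - {r})" by (metis imageI)
      have rS: "r \<in> S" using True T by blast
      have "un v ` S = insert (un v r) (un v ` (S - {r}))" using rS by blast
      also have "\<dots> = un v ` (S - {r})" using m by (rule insert_absorb)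
      finally show ?thesis unfolding c(2) by simp
    qed
    ultimately show ?thesis using g by simp
  next
    case False
    have rS: "r \<in> S" by fact
    have img: "un v ` S - {un v r} = un v ` (S - {r})"
    proof
      show "un v ` S - {un v r} \<subseteq> un v ` (S - {r})" by blast
      show "un v ` (S - {r}) \<subseteq> un v ` S - {un v r}"
      proof
        fix z assume "z \<in> un v ` (S - {r})"
        then obtain y where y: "y \<in> S" "y \<noteq> r" "z = un v y" by blast
        have "un v y \<noteq> un v r" using un_eq[of y r] y False by blast
        then show "z \<in> un v ` S - {un v r}" using y by auto
      qed
    qed
    have connS: "connected_in E (un v ` S)"
      by (rule connected_image[of Gt E "un v", OF compat "1.hyps"(2)])
    from S1[OF st S T False] show ?thesis
    proof
      assume "\<exists>c. Ch = {|c|} \<and> verts c = S - {r}"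
      then obtain c where c: "Ch = {|c|}" "verts c = S - {r}" by blast
      have Tc: "tok \<subseteq> verts c" using c(2) T False by blast
      have stc: "search_tree Gt (verts c) c" using st_Node(3)[OF st] c(1) by simp
      have IH: "search_tree E (un v ` verts c) (gp v c)"
        using "1.IH" c(1) Tc S c(2) by auto
      have g: "gp v (Node r Ch) = Node (un v r) {|gp v c|}" using gp_nontok[OF False, of Ch] c(1) by simp
      have vg: "verts (gp v c) = un v ` (S - {r})" using st_verts[OF IH] c(2) by simp
      have cc: "connected_in E (un v ` (S - {r}))"
        using connected_image[of Gt E "un v", OF compat st_conn[OF stc]] c(2) by simp
      show ?thesis unfolding g
      proof (rule search_tree.intros)
        show "un v r \<in> un v ` S" using rS by blast
        show "connected_in E (un v ` S)" by (rule connS)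
        show "\<forall>t|\<in>|{|gp v c|}. search_tree E (verts t) t" using IH vg c(2) by simp
        show "verts ` fset {|gp v c|} = comps E (un v ` S - {un v r})"
          unfolding img comps_conn[OF cc] using vg by simp
        show "inj_on verts (fset {|gp v c|})" by simp
      qed
    next
      assume lv: "Node None {||} |\<in>| Ch \<and> Node (Some v) {||} |\<in>| Ch"
      let ?X = "S - {r}"
      have sym: "\<And>x y. Gt x y \<Longrightarrow> Gt y x" by (rule Gt_sym)
      have ntc: "\<not> tok \<subseteq> verts c" if c: "c |\<in>| Ch" for c
      proof
        assume tc: "tok \<subseteq> verts c"
        have "None \<in> verts (Node None {||})" by simp
        then have "c = Node None {||}"
          using st_child_disj[of Gt, OF sym st c] lv tc by blast
        then show False using tc by simp
      qed
      have gch: "gp v |`| Ch = map_rtree (un v) |`| Ch"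
      proof (rule fimage_cong)
        fix x assume "x |\<in>| Ch"
        then show "gp v x = map_rtree (un v) x" by (rule gp_map[OF ntc])
      qed simp
      have g: "gp v (Node r Ch) = Node (un v r) (map_rtree (un v) |`| Ch)" using gp_nontok[OF False, of Ch] gch by simp
      have stc: "search_tree E (verts (map_rtree (un v) c)) (map_rtree (un v) c)" if c: "c |\<in>| Ch" for c
        using st_map[of Gt E "un v", OF compat st_Node(3)[OF st c] un_inj[OF ntc[OF c]]]
        by (simp add: verts_map)
      have compN: "{a} \<in> comps Gt ?X" if "a \<in> tok" for a
      proof -
        have "Node a {||} |\<in>| Ch" using lv that by auto
        then have "verts (Node a {||}) \<in> comps Gt ?X" by (rule st_child_comp[OF st])
        then show ?thesis by simp
      qed
      have NX: "None \<in> ?X" and SX: "Some v \<in> ?X" using T False by auto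
      have iso: "\<forall>y\<in>?X. \<not> Gt None y"
      proof (intro ballI notI)
        fix y assume y: "y \<in> ?X" "Gt None y"
        have "{None} = {z \<in> ?X. reach_in Gt ?X None z}"
          using comps_eq[of Gt, OF sym compN[of None]] by simp
        moreover have "reach_in Gt ?X None y" using reach_in_edge[of Gt None y, OF y(2) NX y(1)] .
        ultimately have "y = None" using y(1) by blast
        then show False using y(2) Gt_irr by simp
      qed
      have cX: "comps Gt ?X = insert {None} (comps Gt (?X - {None}))"
        by (rule comps_isolated[of Gt, OF sym iso NX])
      have SvX: "{Some v} \<in> comps Gt (?X - {None})" using compN[of "Some v"] cX by auto
      have injX: "inj_on (un v) (?X - {None})" by (rule un_inj) blast
      have unX: "un v ` ?X = un v ` (?X - {None})"
      proof
        show "un v ` ?X \<subseteq> un v ` (?X - {None})"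
        proof
          fix z assume "z \<in> un v ` ?X"
          then obtain y where y: "y \<in> ?X" "z = un v y" by blast
          show "z \<in> un v ` (?X - {None})"
          proof (cases "y = None")
            case True
            then have "z = un v (Some v)" using y by simp
            then show ?thesis using SX by blast
          next
            case False then show ?thesis using y by blast
          qed
        qed
      qed blast
      have "comps E (un v ` S - {un v r}) = (\<lambda>C. un v ` C) ` comps Gt (?X - {None})"
        unfolding img unX by (rule comps_image[of Gt E "un v", OF compat injX])
      also have "\<dots> = (\<lambda>C. un v ` C) ` comps Gt ?X"
      proof -
        have "{v} = un v ` {Some v}" by simp
        then have "{v} \<in> (\<lambda>C. un v ` C) ` comps Gt (?X - {None})" using SvX by blast
        then show ?thesis unfolding cX by (simp add: insert_absorb)
      qed
      also have "\<dots> = (\<lambda>C. un v ` C) ` (verts ` fset Ch)" unfolding st_Node(4)[OF st] ..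
      also have "\<dots> = verts ` fset (map_rtree (un v) |`| Ch)" by (auto simp: verts_map image_image)
      finally have vc: "verts ` fset (map_rtree (un v) |`| Ch) = comps E (un v ` S - {un v r})" by simp
      have injv: "inj_on verts (fset (map_rtree (un v) |`| Ch))"
      proof (rule inj_onI)
        fix t1 t2 assume t: "t1 \<in> fset (map_rtree (un v) |`| Ch)" "t2 \<in> fset (map_rtree (un v) |`| Ch)"
          "verts t1 = verts t2"
        obtain c1 where c1: "c1 |\<in>| Ch" "t1 = map_rtree (un v) c1" using t(1) by auto
        obtain c2 where c2: "c2 |\<in>| Ch" "t2 = map_rtree (un v) c2" using t(2) by auto
        have eq: "un v ` verts c1 = un v ` verts c2" using t(3) c1 c2 by (simp add: verts_map)
        obtain z where z: "z \<in> verts c1" using verts_ne[of c1] by blast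
        then have "un v z \<in> un v ` verts c2" using eq by blast
        then obtain z' where z': "z' \<in> verts c2" "un v z' = un v z" by (metis imageE)
        have tokleaf: "c = Node a {||}" if "c |\<in>| Ch" "a \<in> verts c" "a \<in> tok" for c a
        proof -
          have "Node a {||} |\<in>| Ch" using lv that(3) by auto
          moreover have "a \<in> verts (Node a {||})" by simp
          ultimately show ?thesis using st_child_disj[of Gt, OF sym st that(1)] that(2) by blast
        qed
        from un_eq[OF z'(2)] show "t1 = t2"
        proof
          assume "z' = z"
          then have "c1 = c2" using st_child_disj[of Gt, OF sym st c1(1) c2(1) z] z'(1) by simp
          then show ?thesis using c1 c2 by simp
        next
          assume "z' \<in> tok \<and> z \<in> tok"
          then have "c1 = Node z {||}" "c2 = Node z' {||}" "un v z = v" "un v z' = v"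
            using tokleaf[OF c1(1) z] tokleaf[OF c2(1) z'(1)] by auto
          then show ?thesis using c1 c2 by simp
        qed
      qed
      show ?thesis unfolding g
      proof (rule search_tree.intros)
        show "un v r \<in> un v ` S" using rS by blast
        show "connected_in E (un v ` S)" by (rule connS)
        show "\<forall>t|\<in>|map_rtree (un v) |`| Ch. search_tree E (verts t) t" using stc by auto
        show "verts ` fset (map_rtree (un v) |`| Ch) = comps E (un v ` S - {un v r})" by (rule vc)
        show "inj_on verts (fset (map_rtree (un v) |`| Ch))" by (rule injv)
      qed
    qed
  qed
qed

end


lemma leaf_no_rot: "\<not> rotation E (Node a {||}) t'"
proof
  assume "rotation E (Node a {||}) t'"
  then show False by (cases rule: rotation.cases) auto
qed

lemma flip3_simps[simp]: "flip3 0 = 0" "flip3 1 = 2" "flip3 2 = 1"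
  by (simp_all add: flip3_def)

lemma flip3_le: "flip3 k \<le> 2" unfolding flip3_def by arith

lemma hh_le2: "hh v t \<le> 2"
  by (cases t) (simp add: flip3_le)

lemma flip3_inj: "k \<le> 2 \<Longrightarrow> j \<le> 2 \<Longrightarrow> flip3 k = flip3 j \<Longrightarrow> k = j"
  by (simp add: flip3_def split: if_splits)

lemma flip3_ne: "k \<in> {1,2} \<Longrightarrow> flip3 k \<noteq> k"
  by (auto simp: flip3_def)

lemma hh_children0:
  assumes "r \<notin> {None, Some v}" "\<And>c. c |\<in>| Ch \<Longrightarrow> hh v c = 0"
  shows "hh v (Node r Ch) = 0"
proof (cases "{None, Some v} \<subseteq> verts (Node r Ch)")
  case True
  have e: "insert 0 (fset (hh v |`| Ch)) = {0}" using assms(2) by auto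
  have m: "Max (insert 0 (fset (hh v |`| Ch))) = 0" unfolding e by simp
  have "hh v (Node r Ch) = flip3 (Max (insert 0 (fset (hh v |`| Ch))))" by (rule hh_nontok[OF assms(1) True])
  then show ?thesis unfolding m by simp
next
  case False then show ?thesis by (rule hh0)
qed

lemma hh_single:
  assumes "r \<notin> {None, Some v}" "{None, Some v} \<subseteq> verts (Node r {|c|})"
  shows "hh v (Node r {|c|}) = flip3 (hh v c)"
proof -
  have e: "insert 0 (fset (hh v |`| {|c|})) = {0, hh v c}" by simp
  have m: "Max (insert 0 (fset (hh v |`| {|c|}))) = hh v c" unfolding e by simp
  have "hh v (Node r {|c|}) = flip3 (Max (insert 0 (fset (hh v |`| {|c|}))))" by (rule hh_nontok[OF assms])
  then show ?thesis unfolding m .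
qed

lemma fimage_fminus_notin:
  assumes a: "a |\<in>| A" and n: "h a |\<notin>| h |`| (A |-| {|a|})"
  shows "h |`| (A |-| {|a|}) = h |`| A |-| {|h a|}"
proof (rule fset_eqI)
  fix y
  show "y |\<in>| h |`| (A |-| {|a|}) \<longleftrightarrow> y |\<in>| h |`| A |-| {|h a|}"
  proof
    assume y: "y |\<in>| h |`| (A |-| {|a|})"
    then have "y \<noteq> h a" using n by metis
    then show "y |\<in>| h |`| A |-| {|h a|}" using y by auto
  next
    assume "y |\<in>| h |`| A |-| {|h a|}"
    then show "y |\<in>| h |`| (A |-| {|a|})" by auto
  qed
qed

lemma ffilter_none: "ffilter P D = {||} \<Longrightarrow> ffilter (\<lambda>x. \<not> P x) D = D"
  by (auto simp: fset_eq_iff)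

lemma ffilter_none': "ffilter (\<lambda>x. \<not> P x) D = {||} \<Longrightarrow> ffilter P D = D"
  by (auto simp: fset_eq_iff)

lemma Union_fminus: assumes "a |\<in>| A" shows "\<Union> (f ` fset A) = f a \<union> \<Union> (f ` fset (A |-| {|a|}))"
proof -
  have "fset A = insert a (fset (A |-| {|a|}))" using assms by auto
  then show ?thesis by (metis Union_insert image_insert)
qed

lemma rot_verts: "rotation E t t' \<Longrightarrow> verts t' = verts t"
proof (induction rule: rotation.induct)
  case (rot_root v Dv Ch u)
  let ?P = "ffilter (\<lambda>S. adj_set E u (verts S)) Dv"
  let ?N = "ffilter (\<lambda>S. \<not> adj_set E u (verts S)) Dv"
  have d: "fset Dv = fset ?P \<union> fset ?N" by auto
  have "verts (Node u Ch) = insert u (\<Union> (verts ` fset Ch))" by simp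
  also have "\<dots> = insert u (verts (Node v Dv) \<union> \<Union> (verts ` fset (Ch |-| {|Node v Dv|})))"
    unfolding Union_fminus[OF rot_root, of verts] by (rule refl)
  also have "\<dots> = insert u (insert v (\<Union> (verts ` fset Dv)) \<union> \<Union> (verts ` fset (Ch |-| {|Node v Dv|})))"
    by simp
  finally have l: "verts (Node u Ch) = insert u (insert v (\<Union> (verts ` fset ?P) \<union> \<Union> (verts ` fset ?N))
      \<union> \<Union> (verts ` fset (Ch |-| {|Node v Dv|})))" unfolding d by simp
  show ?case unfolding l by auto
next
  case (rot_sub t Ch t' w)
  have "verts (Node w Ch) = insert w (verts t \<union> \<Union> (verts ` fset (Ch |-| {|t|})))"
    unfolding verts.simps fimage.rep_eq Union_fminus[OF rot_sub.hyps(1), of verts] by simp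
  then show ?case using rot_sub.IH by simp
qed

context fam
begin

lemma compat_un: "\<And>a b. Gt a b = E (un v a) (un v b)" by (rule Gt_un)

lemma adj_un: "adj_set E (un v u) (un v ` X) = adj_set Gt u X"
  unfolding adj_set_def Gt_un by blast

lemma tok_child_leaf:
  assumes st: "search_tree Gt S (Node r Ch)" and lv: "Node None {||} |\<in>| Ch \<and> Node (Some v) {||} |\<in>| Ch"
    and c: "c |\<in>| Ch" and a: "a \<in> verts c" "a \<in> tok"
  shows "c = Node a {||}"
proof -
  have "Node a {||} |\<in>| Ch" using lv a(2) by auto
  moreover have "a \<in> verts (Node a {||})" by simp
  ultimately show ?thesis using st_child_disj[of Gt, OF Gt_sym st c] a(1) by blast
qed

lemma tok_child_not_both:
  assumes st: "search_tree Gt S (Node r Ch)" and lv: "Node None {||} |\<in>| Ch \<and> Node (Some v) {||} |\<in>| Ch"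
    and c: "c |\<in>| Ch"
  shows "\<not> tok \<subseteq> verts c"
proof
  assume "tok \<subseteq> verts c"
  then have "c = Node None {||}" using tok_child_leaf[OF st lv c, of None] by simp
  then show False using \<open>tok \<subseteq> verts c\<close> by simp
qed

lemma single_child_both:
  assumes st: "search_tree Gt S (Node r Ch)" and S: "S \<subseteq> Vt" and T: "tok \<subseteq> S" and r: "r \<notin> tok"
    and c: "c |\<in>| Ch" and Tc: "tok \<subseteq> verts c"
  shows "Ch = {|c|}"
proof -
  from S1[OF st S T r] show ?thesis
  proof
    assume "\<exists>c. Ch = {|c|} \<and> verts c = S - {r}"
    then show ?thesis using c by auto
  next
    assume lv: "Node None {||} |\<in>| Ch \<and> Node (Some v) {||} |\<in>| Ch"
    then show ?thesis using tok_child_not_both[OF st lv c] Tc by blast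
  qed
qed

lemma H_sub:
  assumes hs: "s |\<in>| Ch" and rot: "rotation Gt s s'"
    and IH: "\<And>S. search_tree Gt S s \<Longrightarrow> search_tree Gt S s' \<Longrightarrow> S \<subseteq> Vt \<Longrightarrow> tok \<subseteq> S \<Longrightarrow>
      (gp v s = gp v s' \<and> hh v s \<noteq> hh v s') \<or> (rotation E (gp v s) (gp v s') \<and> hh v s = hh v s')"
    and st: "search_tree Gt S (Node w Ch)" and st': "search_tree Gt S (Node w (finsert s' (Ch |-| {|s|})))"
    and S: "S \<subseteq> Vt" and T: "tok \<subseteq> S"
  shows "(gp v (Node w Ch) = gp v (Node w (finsert s' (Ch |-| {|s|})))
          \<and> hh v (Node w Ch) \<noteq> hh v (Node w (finsert s' (Ch |-| {|s|}))))
       \<or> (rotation E (gp v (Node w Ch)) (gp v (Node w (finsert s' (Ch |-| {|s|}))))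
          \<and> hh v (Node w Ch) = hh v (Node w (finsert s' (Ch |-| {|s|}))))"
proof -
  let ?T' = "Node w (finsert s' (Ch |-| {|s|}))"
  have vT: "verts (Node w Ch) = S" by (rule st_verts[OF st])
  have vT': "verts ?T' = S" by (rule st_verts[OF st'])
  have sts: "search_tree Gt (verts s) s" by (rule st_Node(3)[OF st hs])
  have vs': "verts s' = verts s" by (rule rot_verts[OF rot])
  have sts': "search_tree Gt (verts s) s'"
    using st_Node(3)[OF st', of s'] vs' by simp
  have vsS: "verts s \<subseteq> S - {w}" by (rule st_child_sub[OF st hs])
  show ?thesis
  proof (cases "w \<in> tok")
    case True
    obtain c where c: "Ch = {|c|}" "verts c = S - {w}" using S2[OF st S T True] by blast
    have sc: "s = c" using hs c(1) by simp
    have nt: "\<not> tok \<subseteq> verts s" using c(2) sc True by blast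
    have ch': "finsert s' (Ch |-| {|s|}) = {|s'|}" using c(1) sc by simp
    have Tv: "tok \<subseteq> verts (Node w Ch)" using T vT by simp
    have Tv': "tok \<subseteq> verts (Node w {|s'|})" using T vT' ch' by simp
    have "gp v (Node w Ch) = the_elem (fset (gp v |`| Ch))" by (rule gp_tok[OF True Tv])
    also have "\<dots> = gp v s" using c(1) sc by simp
    also have "\<dots> = map_rtree (un v) s" by (rule gp_map[OF nt])
    finally have g1: "gp v (Node w Ch) = map_rtree (un v) s" .
    have nt': "\<not> tok \<subseteq> verts s'" using nt vs' by simp
    have "gp v (Node w {|s'|}) = the_elem (fset (gp v |`| {|s'|}))" by (rule gp_tok[OF True Tv'])
    also have "\<dots> = gp v s'" by simp
    also have "\<dots> = map_rtree (un v) s'" by (rule gp_map[OF nt'])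
    finally have g2: "gp v ?T' = map_rtree (un v) s'" unfolding ch' .
    have r: "rotation E (map_rtree (un v) s) (map_rtree (un v) s')"
      by (rule rot_map[of Gt E "un v", OF compat_un rot sts un_inj[OF nt]])
    have h: "hh v (Node w Ch) = hh v ?T'"
      unfolding ch' hh_tok[OF True Tv] hh_tok[OF True Tv'] ..
    show ?thesis using g1 g2 r h by simp
  next
    case False
    from S1[OF st S T False] show ?thesis
    proof
      assume "\<exists>c. Ch = {|c|} \<and> verts c = S - {w}"
      then obtain c where c: "Ch = {|c|}" "verts c = S - {w}" by blast
      have sc: "s = c" using hs c(1) by simp
      have Ts: "tok \<subseteq> verts s" using c(2) sc T False by blast
      have ch': "finsert s' (Ch |-| {|s|}) = {|s'|}" using c(1) sc by simp
      have vsV: "verts s \<subseteq> Vt" using vsS S by blast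
      have ih: "(gp v s = gp v s' \<and> hh v s \<noteq> hh v s') \<or> (rotation E (gp v s) (gp v s') \<and> hh v s = hh v s')"
        by (rule IH[OF sts sts' vsV Ts])
      have g1: "gp v (Node w Ch) = Node (un v w) {|gp v s|}" using gp_nontok[OF False, of Ch] c(1) sc by simp
      have g2: "gp v ?T' = Node (un v w) {|gp v s'|}" unfolding ch' using gp_nontok[OF False, of "{|s'|}"] by simp
      have Tv1: "tok \<subseteq> verts (Node w {|s|})" using Ts by auto
      have Tv2: "tok \<subseteq> verts (Node w {|s'|})" using Ts vs' by auto
      have h1: "hh v (Node w Ch) = flip3 (hh v s)" using hh_single[OF False Tv1] c(1) sc by simp
      have h2: "hh v ?T' = flip3 (hh v s')" unfolding ch' using hh_single[OF False Tv2] by simp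
      from ih show ?thesis
      proof
        assume a: "gp v s = gp v s' \<and> hh v s \<noteq> hh v s'"
        then have "flip3 (hh v s) \<noteq> flip3 (hh v s')" using flip3_inj[OF hh_le2[of v s] hh_le2[of v s']] by blast
        then show ?thesis using a g1 g2 h1 h2 by simp
      next
        assume a: "rotation E (gp v s) (gp v s') \<and> hh v s = hh v s'"
        have m: "gp v s |\<in>| {|gp v s|}" by simp
        have "rotation E (Node (un v w) {|gp v s|}) (Node (un v w) (finsert (gp v s') ({|gp v s|} |-| {|gp v s|})))"
          by (rule rotation.rot_sub[OF m]) (use a in blast)
        then have "rotation E (Node (un v w) {|gp v s|}) (Node (un v w) {|gp v s'|})" by simp
        then show ?thesis using a g1 g2 h1 h2 by simp
      qed
    next
      assume lv: "Node None {||} |\<in>| Ch \<and> Node (Some v) {||} |\<in>| Ch"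
      have snl: "s \<noteq> Node a {||}" for a using rot leaf_no_rot by metis
      have notok: "a \<notin> verts s" if "a \<in> tok" for a
        using tok_child_leaf[OF st lv hs _ that] snl by blast
      have nt: "\<not> tok \<subseteq> verts s" using notok by blast
      have nt': "\<not> tok \<subseteq> verts s'" using nt vs' by simp
      have ntc: "\<not> tok \<subseteq> verts c" if "c |\<in>| Ch" for c by (rule tok_child_not_both[OF st lv that])
      have g1: "gp v (Node w Ch) = Node (un v w) (gp v |`| Ch)" by (rule gp_nontok[OF False])
      have g2: "gp v ?T' = Node (un v w) (finsert (gp v s') (gp v |`| (Ch |-| {|s|})))"
        using gp_nontok[OF False, of "finsert s' (Ch |-| {|s|})"] by simp
      have r0: "rotation E (gp v s) (gp v s')"
        using rot_map[of Gt E "un v", OF compat_un rot sts un_inj[OF nt]] gp_map[OF nt] gp_map[OF nt'] by simp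
      have nin: "gp v s |\<notin>| gp v |`| (Ch |-| {|s|})"
      proof
        assume "gp v s |\<in>| gp v |`| (Ch |-| {|s|})"
        then obtain d where d: "d |\<in>| Ch |-| {|s|}" "gp v s = gp v d" by (metis fimageE)
        then have d: "d |\<in>| Ch" "d \<noteq> s" "gp v d = gp v s" by auto
        have "verts (gp v d) = un v ` verts d" using gp_map[OF ntc[OF d(1)]] by (simp add: verts_map)
        moreover have "verts (gp v s) = un v ` verts s" using gp_map[OF nt] by (simp add: verts_map)
        ultimately have eq: "un v ` verts d = un v ` verts s" using d(3) by simp
        obtain z where z: "z \<in> verts s" using verts_ne[of s] by blast
        then have "un v z \<in> un v ` verts d" using eq by blast
        then obtain z' where z': "z' \<in> verts d" "un v z' = un v z" by (metis imageE)
        have "z \<notin> tok" using notok z by blast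
        then have "z' = z" using un_eq[OF z'(2)] by blast
        then have "d = s" using st_child_disj[of Gt, OF Gt_sym st d(1) hs] z'(1) z by simp
        then show False using d(2) by simp
      qed
      have e: "gp v |`| (Ch |-| {|s|}) = gp v |`| Ch |-| {|gp v s|}"
        by (rule fimage_fminus_notin[OF hs nin])
      have m: "gp v s |\<in>| gp v |`| Ch" using hs by simp
      have r: "rotation E (gp v (Node w Ch)) (gp v ?T')"
        unfolding g1 g2 e by (rule rotation.rot_sub[OF m r0])
      have h1: "hh v (Node w Ch) = 0"
      proof (rule hh_children0[OF False])
        fix d assume "d |\<in>| Ch" then show "hh v d = 0" by (rule hh0[OF ntc])
      qed
      have h2: "hh v ?T' = 0"
      proof (rule hh_children0[OF False])
        fix d assume "d |\<in>| finsert s' (Ch |-| {|s|})"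
        then have "d = s' \<or> d |\<in>| Ch" by auto
        then show "hh v d = 0"
        proof
          assume "d = s'" then show ?thesis using hh0[OF nt'] by simp
        next
          assume "d |\<in>| Ch" then show ?thesis by (rule hh0[OF ntc])
        qed
      qed
      show ?thesis using r h1 h2 by simp
    qed
  qed
qed

end


declare gp.simps[simp del] hh.simps[simp del]

lemma gp_fimage_lack:
  assumes "\<And>d. d |\<in>| D \<Longrightarrow> \<not> {None, Some v} \<subseteq> verts d"
  shows "gp v |`| D = map_rtree (un v) |`| D"
proof (rule fimage_cong)
  fix d assume "d |\<in>| D" then show "gp v d = map_rtree (un v) d" by (rule gp_map[OF assms])
qed simp

lemma ffilter_adj_map:
  assumes compat: "\<And>a b. E1 a b = E2 (f a) (f b)"
  shows "ffilter (\<lambda>S. adj_set E2 (f u) (verts S)) (map_rtree f |`| D)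
       = map_rtree f |`| ffilter (\<lambda>S. adj_set E1 u (verts S)) D"
    and "ffilter (\<lambda>S. \<not> adj_set E2 (f u) (verts S)) (map_rtree f |`| D)
       = map_rtree f |`| ffilter (\<lambda>S. \<not> adj_set E1 u (verts S)) D"
  using fimage_ffilter[of "map_rtree f" "\<lambda>S. adj_set E2 (f u) (verts S)" D]
    fimage_ffilter[of "map_rtree f" "\<lambda>S. \<not> adj_set E2 (f u) (verts S)" D]
    adj_set_map[of E1 E2 f, OF compat] by simp_all

context fam
begin

lemma H_root:
  fixes x Dx Ch u S
  defines "P \<equiv> ffilter (\<lambda>S. adj_set Gt u (verts S)) Dx"
    and "N \<equiv> ffilter (\<lambda>S. \<not> adj_set Gt u (verts S)) Dx"
  assumes hc: "Node x Dx |\<in>| Ch"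
    and st: "search_tree Gt S (Node u Ch)"
    and st': "search_tree Gt S (Node x (finsert (Node u ((Ch |-| {|Node x Dx|}) |\<union>| P)) N))"
    and S: "S \<subseteq> Vt" and T: "tok \<subseteq> S"
  shows "(gp v (Node u Ch) = gp v (Node x (finsert (Node u ((Ch |-| {|Node x Dx|}) |\<union>| P)) N))
          \<and> hh v (Node u Ch) \<noteq> hh v (Node x (finsert (Node u ((Ch |-| {|Node x Dx|}) |\<union>| P)) N)))
       \<or> (rotation E (gp v (Node u Ch)) (gp v (Node x (finsert (Node u ((Ch |-| {|Node x Dx|}) |\<union>| P)) N)))
          \<and> hh v (Node u Ch) = hh v (Node x (finsert (Node u ((Ch |-| {|Node x Dx|}) |\<union>| P)) N)))"
proof -
  define c where "c = Node x Dx"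
  define U where "U = Node u ((Ch |-| {|c|}) |\<union>| P)"
  define T' where "T' = Node x (finsert U N)"
  have T'eq: "Node x (finsert (Node u ((Ch |-| {|Node x Dx|}) |\<union>| P)) N) = T'"
    unfolding T'_def U_def c_def ..
  have stT': "search_tree Gt S T'" using st' T'eq by simp
  have hc': "c |\<in>| Ch" using hc c_def by simp
  have vT: "verts (Node u Ch) = S" by (rule st_verts[OF st])
  have vT': "verts T' = S" by (rule st_verts[OF stT'])
  have TvT: "tok \<subseteq> verts (Node u Ch)" using vT T by simp
  have TvT': "tok \<subseteq> verts T'" using vT' T by simp
  have uS: "u \<in> S" by (rule st_Node(1)[OF st])
  have vcS: "verts c \<subseteq> S - {u}" by (rule st_child_sub[OF st hc'])
  have unc: "u \<notin> verts c" using vcS by blast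
  have xu: "x \<noteq> u" using unc c_def by auto
  have stc: "search_tree Gt (verts c) c" by (rule st_Node(3)[OF st hc'])
  have cV: "verts c \<subseteq> Vt" using vcS S by blast
  have Dsub: "verts D \<subseteq> verts c - {x}" if "D |\<in>| Dx" for D
    using st_child_sub[OF stc[unfolded c_def] that] c_def by simp
  have uD: "u \<notin> verts D" if "D |\<in>| Dx" for D using Dsub[OF that] unc by blast
  have xD: "x \<notin> verts D" if "D |\<in>| Dx" for D using Dsub[OF that] by blast
  have PD: "D |\<in>| Dx" if "D |\<in>| P" for D using that unfolding P_def by simp
  have ND: "D |\<in>| Dx" if "D |\<in>| N" for D using that unfolding N_def by simp
  have UnD: "D \<noteq> U" if "D |\<in>| Dx" for D using uD[OF that] unfolding U_def by auto
  have stU: "search_tree Gt (verts U) U" using st_Node(3)[OF stT'[unfolded T'_def], of U] by simp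
  have N0: "N = {||}" if "finsert U N = {|c'|}" for c'
  proof -
    have "U = c'" using that by (metis finsertI1 fsingletonE)
    have "D = U" if "D |\<in>| N" for D using that \<open>finsert U N = {|c'|}\<close> \<open>U = c'\<close> by auto
    then show ?thesis using UnD ND by (metis fset_eqI bot_fset.rep_eq empty_iff)
  qed
  have PDx: "P = Dx" if "N = {||}" using ffilter_none'[of "\<lambda>S. adj_set Gt u (verts S)" Dx] that
    unfolding P_def N_def by simp
  have main: "(gp v (Node u Ch) = gp v T' \<and> hh v (Node u Ch) \<noteq> hh v T')
       \<or> (rotation E (gp v (Node u Ch)) (gp v T') \<and> hh v (Node u Ch) = hh v T')"
  proof (cases "u \<in> tok")
    case uT: True
    obtain c0 where c0: "Ch = {|c0|}" "verts c0 = S - {u}" using S2[OF st S T uT] by blast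
    have Chc: "Ch = {|c|}" using c0(1) hc' by simp
    have Chm: "Ch |-| {|c|} = {||}" using Chc by simp
    have vc: "verts c = S - {u}" using c0 Chc by simp
    have ntc: "\<not> tok \<subseteq> verts c" using unc uT by blast
    have gT: "gp v (Node u Ch) = map_rtree (un v) c"
    proof -
      have "gp v (Node u Ch) = the_elem (fset (gp v |`| Ch))" by (rule gp_tok[OF uT TvT])
      also have "\<dots> = gp v c" using Chc by simp
      also have "\<dots> = map_rtree (un v) c" by (rule gp_map[OF ntc])
      finally show ?thesis .
    qed
    have hT: "hh v (Node u Ch) = (if u = None then 2 else 1)" by (rule hh_tok[OF uT TvT])
    have gDx: "gp v |`| Dx = map_rtree (un v) |`| Dx"
      by (rule gp_fimage_lack) (use uD uT in blast)
    have mc: "map_rtree (un v) c = Node (un v x) (map_rtree (un v) |`| Dx)" unfolding c_def by simp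
    show ?thesis
    proof (cases "x \<in> tok")
      case xT: True
      obtain c' where c': "finsert U N = {|c'|}" "verts c' = S - {x}"
        using S2[OF stT'[unfolded T'_def] S T xT] by blast
      have Ne: "N = {||}" by (rule N0[OF c'(1)])
      have Pe: "P = Dx" by (rule PDx[OF Ne])
      have T'e: "T' = Node x {|Node u Dx|}" unfolding T'_def U_def Ne Pe Chm by simp
      have nt2: "\<not> tok \<subseteq> verts (Node u Dx)" using xD xu xT by auto
      have g2: "gp v T' = map_rtree (un v) (Node u Dx)"
      proof -
        have "gp v T' = the_elem (fset (gp v |`| {|Node u Dx|}))" unfolding T'e
          by (rule gp_tok[OF xT TvT'[unfolded T'e]])
        also have "\<dots> = gp v (Node u Dx)" by simp
        also have "\<dots> = map_rtree (un v) (Node u Dx)" by (rule gp_map[OF nt2])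
        finally show ?thesis .
      qed
      have unx: "un v u = un v x" using uT xT by auto
      have hT': "hh v T' = (if x = None then 2 else 1)" unfolding T'e by (rule hh_tok[OF xT TvT'[unfolded T'e]])
      have "hh v (Node u Ch) \<noteq> hh v T'" using hT hT' uT xT xu by auto
      then show ?thesis using gT g2 mc unx by simp
    next
      case xN: False
      from S1[OF stT'[unfolded T'_def] S T xN] show ?thesis
      proof
        assume "\<exists>c'. finsert U N = {|c'|} \<and> verts c' = S - {x}"
        then obtain c' where c': "finsert U N = {|c'|}" "verts c' = S - {x}" by blast
        have Ne: "N = {||}" by (rule N0[OF c'(1)])
        have Pe: "P = Dx" by (rule PDx[OF Ne])
        have T'e: "T' = Node x {|Node u Dx|}" unfolding T'_def U_def Ne Pe Chm by simp
        have Ue: "U = Node u Dx" unfolding U_def Pe Chm by simp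
        have vU: "verts U = S - {x}" using c' Ue by (metis finsertI1 fsingletonE)
        have TU: "tok \<subseteq> verts (Node u Dx)" using vU Ue T xN by auto
        have stU': "search_tree Gt (verts (Node u Dx)) (Node u Dx)" using stU Ue by simp
        obtain D where D: "Dx = {|D|}" "verts D = verts (Node u Dx) - {u}"
          using S2[OF stU' _ TU uT] vU Ue S by blast
        have ntD: "\<not> tok \<subseteq> verts D" using uD D(1) uT by auto
        have "gp v (Node u Dx) = the_elem (fset (gp v |`| Dx))" by (rule gp_tok[OF uT TU])
        also have "\<dots> = map_rtree (un v) D" using D(1) gp_map[OF ntD] by simp
        finally have gU: "gp v (Node u Dx) = map_rtree (un v) D" .
        have g2: "gp v T' = Node (un v x) {|map_rtree (un v) D|}"
          unfolding T'e gp_nontok[OF xN] by (simp add: gU)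
        have hU: "hh v (Node u Dx) = (if u = None then 2 else 1)" by (rule hh_tok[OF uT TU])
        have hT': "hh v T' = flip3 (hh v (Node u Dx))"
          unfolding T'e by (rule hh_single[OF xN TvT'[unfolded T'e]])
        have "hh v (Node u Ch) \<noteq> hh v T'" unfolding hT hT' hU by (simp add: flip3_def)
        then show ?thesis using gT g2 mc D(1) by simp
      next
        assume lv: "Node None {||} |\<in>| finsert U N \<and> Node (Some v) {||} |\<in>| finsert U N"
        have Uu: "U = Node u {||}"
        proof -
          have "Node u {||} |\<in>| finsert U N" using lv uT by auto
          moreover have "Node u {||} |\<notin>| N" using ND uD by force
          ultimately show ?thesis by simp
        qed
        have Pe: "P = {||}" using Uu unfolding U_def by simp
        have Ne: "N = Dx" using ffilter_none[of "\<lambda>S. adj_set Gt u (verts S)" Dx] Pe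
          unfolding P_def N_def by simp
        obtain L where L: "L \<in> tok" "L \<noteq> u" using uT by auto
        have LN: "Node L {||} |\<in>| Dx"
        proof -
          have "Node L {||} |\<in>| finsert U N" using lv L(1) by auto
          moreover have "Node L {||} \<noteq> U" using Uu L(2) by simp
          ultimately show ?thesis using Ne by simp
        qed
        have T'e: "T' = Node x (finsert (Node u {||}) Dx)" unfolding T'_def Uu Ne ..
        have gl: "gp v (Node u {||}) = Node v {||}"
          using gp_map[of v "Node u {||}"] uT L by auto
        have mL: "Node v {||} |\<in>| map_rtree (un v) |`| Dx"
        proof -
          have "map_rtree (un v) (Node L {||}) = Node v {||}" using L(1) by auto
          then show ?thesis using LN by (metis fimageI)
        qed
        have g2: "gp v T' = Node (un v x) (map_rtree (un v) |`| Dx)"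
          unfolding T'e gp_nontok[OF xN] fimage_finsert gl gDx using mL by (simp add: finsert_absorb)
        have hT': "hh v T' = 0" unfolding T'_def
        proof (rule hh_children0[OF xN])
          fix d assume "d |\<in>| finsert U N"
          then have "d = Node u {||} \<or> d |\<in>| Dx" using Uu Ne by auto
          then show "hh v d = 0"
          proof
            assume "d = Node u {||}" then show ?thesis using hh0[of v d] uT L by auto
          next
            assume "d |\<in>| Dx" then show ?thesis using hh0[of v d] uD uT by blast
          qed
        qed
        have "hh v (Node u Ch) \<noteq> hh v T'" unfolding hT hT' by simp
        then show ?thesis using gT g2 mc by simp
      qed
    qed
  next
    case uN: False
    have gT: "gp v (Node u Ch) = Node (un v u) (gp v |`| Ch)" by (rule gp_nontok[OF uN])
    show ?thesis
    proof (cases "x \<in> tok")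
      case xT: True
      show ?thesis
      proof (cases "tok \<subseteq> verts c")
        case Tc: True
        have Chc: "Ch = {|c|}" by (rule single_child_both[OF st S T uN hc' Tc])
        have Chm: "Ch |-| {|c|} = {||}" using Chc by simp
        obtain D where D: "Dx = {|D|}" "verts D = verts c - {x}"
          using S2[OF stc[unfolded c_def] cV[unfolded c_def] Tc[unfolded c_def] xT] c_def by auto
        obtain c' where c': "finsert U N = {|c'|}" "verts c' = S - {x}"
          using S2[OF stT'[unfolded T'_def] S T xT] by blast
        have Ne: "N = {||}" by (rule N0[OF c'(1)])
        have Pe: "P = {|D|}" using PDx[OF Ne] D(1) by simp
        have T'e: "T' = Node x {|Node u {|D|}|}" unfolding T'_def U_def Ne Pe Chm by simp
        have xD': "x \<notin> verts D" using xD D(1) by simp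
        have nt2: "\<not> tok \<subseteq> verts (Node u {|D|})" using xD' xu xT by auto
        have g2: "gp v T' = Node (un v u) {|map_rtree (un v) D|}"
        proof -
          have "gp v T' = the_elem (fset (gp v |`| {|Node u {|D|}|}))" unfolding T'e
            by (rule gp_tok[OF xT TvT'[unfolded T'e]])
          also have "\<dots> = gp v (Node u {|D|})" by simp
          also have "\<dots> = map_rtree (un v) (Node u {|D|})" by (rule gp_map[OF nt2])
          finally show ?thesis by simp
        qed
        have ntD: "\<not> tok \<subseteq> verts D" using xD' xT by auto
        have gc: "gp v c = map_rtree (un v) D"
        proof -
          have "gp v c = the_elem (fset (gp v |`| Dx))" unfolding c_def
            by (rule gp_tok[OF xT Tc[unfolded c_def]])
          also have "\<dots> = map_rtree (un v) D" using D(1) gp_map[OF ntD] by simp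
          finally show ?thesis .
        qed
        have g1: "gp v (Node u Ch) = Node (un v u) {|map_rtree (un v) D|}" using gT gc unfolding Chc by simp
        have hc1: "hh v c = (if x = None then 2 else 1)" unfolding c_def by (rule hh_tok[OF xT Tc[unfolded c_def]])
        have hT: "hh v (Node u Ch) = flip3 (hh v c)" unfolding Chc by (rule hh_single[OF uN TvT[unfolded Chc]])
        have hT': "hh v T' = (if x = None then 2 else 1)" unfolding T'e by (rule hh_tok[OF xT TvT'[unfolded T'e]])
        have "hh v (Node u Ch) \<noteq> hh v T'" unfolding hT hT' hc1 by (simp add: flip3_def)
        then show ?thesis using g1 g2 by simp
      next
        case nTc: False
        from S1[OF st S T uN] have lv: "Node None {||} |\<in>| Ch \<and> Node (Some v) {||} |\<in>| Ch"
        proof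
          assume "\<exists>c'. Ch = {|c'|} \<and> verts c' = S - {u}"
          then have "verts c = S - {u}" using hc' by auto
          then show ?thesis using nTc T uN by blast
        qed
        have cl: "c = Node x {||}" by (rule tok_child_leaf[OF st lv hc' _ xT]) (simp add: c_def)
        have Dx0: "Dx = {||}" using cl c_def by simp
        have Pe: "P = {||}" and Ne: "N = {||}" unfolding P_def N_def Dx0 by (auto simp: fset_eq_iff)
        obtain L where L: "L \<in> tok" "L \<noteq> x" using xT by auto
        have LC: "Node L {||} |\<in>| Ch |-| {|c|}" using lv L cl by auto
        have lackCh: "\<not> tok \<subseteq> verts d" if "d |\<in>| Ch" for d by (rule tok_child_not_both[OF st lv that])
        have T'e: "T' = Node x {|Node u (Ch |-| {|c|})|}" unfolding T'_def U_def Ne Pe by simp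
        have xnot: "x \<notin> verts d" if "d |\<in>| Ch |-| {|c|}" for d
        proof
          assume "x \<in> verts d"
          moreover have "x \<in> verts c" using c_def by simp
          ultimately have "d = c" using st_child_disj[of Gt, OF Gt_sym st _ hc'] that by auto
          then show False using that by simp
        qed
        have nt2: "\<not> tok \<subseteq> verts (Node u (Ch |-| {|c|}))" using xnot xu xT by auto
        have g2: "gp v T' = Node (un v u) (map_rtree (un v) |`| (Ch |-| {|c|}))"
        proof -
          have "gp v T' = the_elem (fset (gp v |`| {|Node u (Ch |-| {|c|})|}))" unfolding T'e
            by (rule gp_tok[OF xT TvT'[unfolded T'e]])
          also have "\<dots> = gp v (Node u (Ch |-| {|c|}))" by simp
          also have "\<dots> = map_rtree (un v) (Node u (Ch |-| {|c|}))" by (rule gp_map[OF nt2])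
          finally show ?thesis by simp
        qed
        have gCh: "gp v |`| Ch = map_rtree (un v) |`| Ch" by (rule gp_fimage_lack[OF lackCh])
        have Che: "Ch = finsert c (Ch |-| {|c|})" using hc' by auto
        have mcv: "map_rtree (un v) c = Node v {||}" using cl xT by auto
        have mL: "Node v {||} |\<in>| map_rtree (un v) |`| (Ch |-| {|c|})"
        proof -
          have "map_rtree (un v) (Node L {||}) = Node v {||}" using L(1) by auto
          then show ?thesis using LC by (metis fimageI)
        qed
        have "map_rtree (un v) |`| Ch = map_rtree (un v) |`| (Ch |-| {|c|})"
          by (subst Che) (simp only: fimage_finsert mcv finsert_absorb[OF mL])
        then have g1: "gp v (Node u Ch) = gp v T'" unfolding gT gCh g2 by simp
        have hT: "hh v (Node u Ch) = 0"
        proof (rule hh_children0[OF uN])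
          fix d assume "d |\<in>| Ch" then show "hh v d = 0" by (rule hh0[OF lackCh])
        qed
        have hT': "hh v T' = (if x = None then 2 else 1)" unfolding T'e by (rule hh_tok[OF xT TvT'[unfolded T'e]])
        have "hh v (Node u Ch) \<noteq> hh v T'" unfolding hT hT' by simp
        then show ?thesis using g1 by simp
      qed
    next
      case xN: False
      show ?thesis
      proof (cases "tok \<subseteq> verts c")
        case Tc: True
        have Chc: "Ch = {|c|}" by (rule single_child_both[OF st S T uN hc' Tc])
        have Chm: "Ch |-| {|c|} = {||}" using Chc by simp
        have Ue: "U = Node u P" unfolding U_def Chm by simp
        have TvC: "tok \<subseteq> verts (Node x Dx)" using Tc c_def by simp
        have hT: "hh v (Node u Ch) = flip3 (hh v c)" unfolding Chc by (rule hh_single[OF uN TvT[unfolded Chc]])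
        have g1: "gp v (Node u Ch) = Node (un v u) {|gp v c|}" using gT unfolding Chc by simp
        from S1[OF stc[unfolded c_def] cV[unfolded c_def] TvC xN] show ?thesis
        proof
          assume "\<exists>c'. Dx = {|c'|} \<and> verts c' = verts (Node x Dx) - {x}"
          then obtain D where D: "Dx = {|D|}" "verts D = verts (Node x Dx) - {x}" by blast
          have TD: "tok \<subseteq> verts D" using D(2) TvC xN by blast
          have stD: "search_tree Gt (verts D) D" using st_Node(3)[OF stc[unfolded c_def], of D] D(1) by simp
          have DV: "verts D \<subseteq> Vt" using D(2) cV c_def by auto
          have adj: "adj_set Gt u (verts D)"
          proof -
            have "reach_in Gt (verts D) None (Some v)"
              using st_conn[OF stD] TD unfolding connected_in_def by blast
            then obtain b where b: "b \<in> verts D" "b \<in> Bb" using reach_A_B[OF DV tok_A(1)] by blast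
            have "u \<in> Vt" using uS S by blast
            then have "u \<in> Aa \<or> u \<in> Bb" by (rule Vt_cases)
            then show ?thesis
            proof
              assume "u \<in> Aa" then show ?thesis using Gt_AB b unfolding adj_set_def by blast
            next
              assume "u \<in> Bb" then have "Gt u None" using Gt_AB[OF tok_A(1)] Gt_sym by blast
              then show ?thesis using TD unfolding adj_set_def by blast
            qed
          qed
          have Pe: "P = {|D|}" unfolding P_def D(1) using adj by (auto simp: fset_eq_iff)
          have Ne: "N = {||}" unfolding N_def D(1) using adj by (auto simp: fset_eq_iff)
          have T'e: "T' = Node x {|Node u {|D|}|}" unfolding T'_def Ue Pe Ne by simp
          have TvU: "tok \<subseteq> verts (Node u {|D|})" using TD by auto
          have stGD: "search_tree E (un v ` verts D) (gp v D)" by (rule G2[OF stD DV TD])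
          have vgD: "verts (gp v D) = un v ` verts D" by (rule st_verts[OF stGD])
          have gc: "gp v c = Node (un v x) {|gp v D|}" unfolding c_def D(1) gp_nontok[OF xN] by simp
          have g2: "gp v T' = Node (un v x) {|Node (un v u) {|gp v D|}|}"
            unfolding T'e gp_nontok[OF xN] by (simp add: gp_nontok[OF uN])
          have adjE: "adj_set E (un v u) (verts (gp v D))" unfolding vgD adj_un by (rule adj)
          let ?c' = "Node (un v x) {|gp v D|}"
          have m: "?c' |\<in>| {|?c'|}" by simp
          have r0: "rotation E (Node (un v u) {|?c'|})
             (Node (un v x) (finsert (Node (un v u) (({|?c'|} |-| {|?c'|}) |\<union>| ffilter (\<lambda>S. adj_set E (un v u) (verts S)) {|gp v D|}))
               (ffilter (\<lambda>S. \<not> adj_set E (un v u) (verts S)) {|gp v D|})))"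
            by (rule rotation.rot_root[OF m])
          have f1: "ffilter (\<lambda>S. adj_set E (un v u) (verts S)) {|gp v D|} = {|gp v D|}"
            using adjE by (auto simp: fset_eq_iff)
          have f2: "ffilter (\<lambda>S. \<not> adj_set E (un v u) (verts S)) {|gp v D|} = {||}"
            using adjE by (auto simp: fset_eq_iff)
          have r: "rotation E (gp v (Node u Ch)) (gp v T')"
            using r0 unfolding g1 gc g2 f1 f2 by simp
          have hc1: "hh v c = flip3 (hh v D)" unfolding c_def D(1)
            by (rule hh_single[OF xN TvC[unfolded D(1)]])
          have hU: "hh v (Node u {|D|}) = flip3 (hh v D)" by (rule hh_single[OF uN TvU])
          have hT': "hh v T' = flip3 (hh v (Node u {|D|}))" unfolding T'e
            by (rule hh_single[OF xN TvT'[unfolded T'e]])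
          have "hh v (Node u Ch) = hh v T'" unfolding hT hT' hc1 hU ..
          then show ?thesis using r by simp
        next
          assume lvc: "Node None {||} |\<in>| Dx \<and> Node (Some v) {||} |\<in>| Dx"
          have lackD: "\<not> tok \<subseteq> verts d" if "d |\<in>| Dx" for d
            by (rule tok_child_not_both[OF stc[unfolded c_def] lvc that])
          have gDx: "gp v |`| Dx = map_rtree (un v) |`| Dx" by (rule gp_fimage_lack[OF lackD])
          have gc: "gp v c = Node (un v x) (map_rtree (un v) |`| Dx)"
            unfolding c_def gp_nontok[OF xN] gDx ..
          have gP: "gp v |`| P = map_rtree (un v) |`| P" by (rule gp_fimage_lack) (use lackD PD in blast)
          have gN: "gp v |`| N = map_rtree (un v) |`| N" by (rule gp_fimage_lack) (use lackD ND in blast)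
          have g2: "gp v T' = Node (un v x) (finsert (Node (un v u) (map_rtree (un v) |`| P)) (map_rtree (un v) |`| N))"
            unfolding T'_def gp_nontok[OF xN] fimage_finsert Ue gp_nontok[OF uN] gP gN ..
          let ?c' = "Node (un v x) (map_rtree (un v) |`| Dx)"
          have m: "?c' |\<in>| {|?c'|}" by simp
          have r0: "rotation E (Node (un v u) {|?c'|})
             (Node (un v x) (finsert (Node (un v u) (({|?c'|} |-| {|?c'|}) |\<union>| ffilter (\<lambda>S. adj_set E (un v u) (verts S)) (map_rtree (un v) |`| Dx)))
               (ffilter (\<lambda>S. \<not> adj_set E (un v u) (verts S)) (map_rtree (un v) |`| Dx))))"
            by (rule rotation.rot_root[OF m])
          have r: "rotation E (gp v (Node u Ch)) (gp v T')"
            using r0 unfolding g1 gc g2 ffilter_adj_map[of Gt E "un v", OF compat_un] P_def N_def by simp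
          have hc0: "hh v c = 0" unfolding c_def
          proof (rule hh_children0[OF xN])
            fix d assume "d |\<in>| Dx" then show "hh v d = 0" by (rule hh0[OF lackD])
          qed
          have hT': "hh v T' = 0" unfolding T'_def
          proof (rule hh_children0[OF xN])
            fix d assume "d |\<in>| finsert U N"
            then have "d = U \<or> d |\<in>| N" by auto
            then show "hh v d = 0"
            proof
              assume "d = U"
              have "hh v U = 0" unfolding Ue
              proof (rule hh_children0[OF uN])
                fix e assume "e |\<in>| P" then show "hh v e = 0" by (rule hh0[OF lackD[OF PD]])
              qed
              then show ?thesis using \<open>d = U\<close> by simp
            next
              assume "d |\<in>| N" then show ?thesis by (rule hh0[OF lackD[OF ND]])
            qed
          qed
          have "hh v (Node u Ch) = hh v T'" unfolding hT hc0 hT' by simp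
          then show ?thesis using r by simp
        qed
      next
        case nTc: False
        from S1[OF st S T uN] have lv: "Node None {||} |\<in>| Ch \<and> Node (Some v) {||} |\<in>| Ch"
        proof
          assume "\<exists>c'. Ch = {|c'|} \<and> verts c' = S - {u}"
          then have "verts c = S - {u}" using hc' by auto
          then show ?thesis using nTc T uN by blast
        qed
        have notok: "a \<notin> verts c" if "a \<in> tok" for a
        proof
          assume "a \<in> verts c"
          then have "c = Node a {||}" by (rule tok_child_leaf[OF st lv hc' _ that])
          then show False using xN that c_def by simp
        qed
        have lackCh: "\<not> tok \<subseteq> verts d" if "d |\<in>| Ch" for d by (rule tok_child_not_both[OF st lv that])
        have lackD: "\<not> tok \<subseteq> verts d" if "d |\<in>| Dx" for d
          using Dsub[OF that] notok by blast
        have gCh: "gp v |`| Ch = map_rtree (un v) |`| Ch" by (rule gp_fimage_lack[OF lackCh])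
        have gP: "gp v |`| P = map_rtree (un v) |`| P" by (rule gp_fimage_lack) (use lackD PD in blast)
        have gN: "gp v |`| N = map_rtree (un v) |`| N" by (rule gp_fimage_lack) (use lackD ND in blast)
        have gCm: "gp v |`| (Ch |-| {|c|}) = map_rtree (un v) |`| (Ch |-| {|c|})"
          by (rule gp_fimage_lack) (use lackCh in auto)
        have g2: "gp v T' = Node (un v x) (finsert (Node (un v u) (map_rtree (un v) |`| (Ch |-| {|c|}) |\<union>| map_rtree (un v) |`| P)) (map_rtree (un v) |`| N))"
          unfolding T'_def gp_nontok[OF xN] fimage_finsert U_def gp_nontok[OF uN] fimage_funion gCm gP gN ..
        have nin: "map_rtree (un v) c |\<notin>| map_rtree (un v) |`| (Ch |-| {|c|})"
        proof
          assume "map_rtree (un v) c |\<in>| map_rtree (un v) |`| (Ch |-| {|c|})"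
          then obtain d where d: "d |\<in>| Ch |-| {|c|}" "map_rtree (un v) c = map_rtree (un v) d"
            by (metis fimageE)
          have "un v x \<in> verts (map_rtree (un v) c)" unfolding c_def by simp
          then have "un v x \<in> un v ` verts d" using d(2) by (simp add: verts_map)
          then obtain z where z: "z \<in> verts d" "un v z = un v x" by (metis imageE)
          have "z = x" using un_eq[OF z(2)] xN by blast
          moreover have "x \<in> verts c" unfolding c_def by simp
          ultimately have "d = c" using st_child_disj[of Gt, OF Gt_sym st _ hc'] z(1) d(1) by auto
          then show False using d(1) by simp
        qed
        have em: "map_rtree (un v) |`| (Ch |-| {|c|}) = map_rtree (un v) |`| Ch |-| {|map_rtree (un v) c|}"
          by (rule fimage_fminus_notin[OF hc' nin])
        have mc: "map_rtree (un v) c = Node (un v x) (map_rtree (un v) |`| Dx)" unfolding c_def by simp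
        have m: "Node (un v x) (map_rtree (un v) |`| Dx) |\<in>| map_rtree (un v) |`| Ch"
          using hc' mc by (metis fimageI)
        have r0: "rotation E (Node (un v u) (map_rtree (un v) |`| Ch))
           (Node (un v x) (finsert (Node (un v u) ((map_rtree (un v) |`| Ch |-| {|Node (un v x) (map_rtree (un v) |`| Dx)|}) |\<union>| ffilter (\<lambda>S. adj_set E (un v u) (verts S)) (map_rtree (un v) |`| Dx)))
             (ffilter (\<lambda>S. \<not> adj_set E (un v u) (verts S)) (map_rtree (un v) |`| Dx))))"
          by (rule rotation.rot_root[OF m])
        have em': "map_rtree (un v) |`| Ch |-| {|Node (un v x) (map_rtree (un v) |`| Dx)|}
            = map_rtree (un v) |`| (Ch |-| {|c|})" using em mc by simp
        have fa: "ffilter (\<lambda>S. adj_set E (un v u) (verts S)) (map_rtree (un v) |`| Dx) = map_rtree (un v) |`| P"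
          unfolding P_def by (rule ffilter_adj_map(1)[of Gt E "un v", OF compat_un])
        have fn: "ffilter (\<lambda>S. \<not> adj_set E (un v u) (verts S)) (map_rtree (un v) |`| Dx) = map_rtree (un v) |`| N"
          unfolding N_def by (rule ffilter_adj_map(2)[of Gt E "un v", OF compat_un])
        have r: "rotation E (gp v (Node u Ch)) (gp v T')"
          unfolding gT gCh g2 using r0 unfolding em' fa fn .
        have hT: "hh v (Node u Ch) = 0"
        proof (rule hh_children0[OF uN])
          fix d assume "d |\<in>| Ch" then show "hh v d = 0" by (rule hh0[OF lackCh])
        qed
        have hT': "hh v T' = 0" unfolding T'_def
        proof (rule hh_children0[OF xN])
          fix d assume "d |\<in>| finsert U N"
          then have "d = U \<or> d |\<in>| N" by auto
          then show "hh v d = 0"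
          proof
            assume "d = U"
            have "hh v U = 0" unfolding U_def
            proof (rule hh_children0[OF uN])
              fix e assume "e |\<in>| Ch |-| {|c|} |\<union>| P"
              then have "e |\<in>| Ch \<or> e |\<in>| Dx" using PD by auto
              then show "hh v e = 0"
              proof
                assume "e |\<in>| Ch" then show ?thesis by (rule hh0[OF lackCh])
              next
                assume "e |\<in>| Dx" then show ?thesis by (rule hh0[OF lackD])
              qed
            qed
            then show ?thesis using \<open>d = U\<close> by simp
          next
            assume "d |\<in>| N" then show ?thesis by (rule hh0[OF lackD[OF ND]])
          qed
        qed
        have "hh v (Node u Ch) = hh v T'" unfolding hT hT' ..
        then show ?thesis using r by simp
      qed
    qed
  qed
  then show ?thesis unfolding T'eq .
qed

end


lemma mod_small2: fixes s k :: nat assumes "s < 2 * k" shows "s mod k = (if s < k then s else s - k)"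
proof (cases "s < k")
  case True then show ?thesis by simp
next
  case False
  then have "s mod k = (s - k) mod k" by (simp add: le_mod_geq)
  also have "\<dots> = s - k" using assms False by simp
  finally show ?thesis using False by simp
qed

lemma mod_add_cancel_lt:
  fixes a b1 b2 k :: nat
  assumes "(a + b1) mod k = (a + b2) mod k" "b1 < k" "b2 < k"
  shows "b1 = b2"
proof -
  have kp: "0 < k" using assms(2) by simp
  define r where "r = a mod k"
  have r: "r < k" unfolding r_def using kp by simp
  have e: "(r + b1) mod k = (r + b2) mod k" using assms(1) unfolding r_def by (simp add: mod_add_left_eq)
  have "(r + b1) mod k = (if r + b1 < k then r + b1 else r + b1 - k)" by (rule mod_small2) (use r assms(2) in simp)
  moreover have "(r + b2) mod k = (if r + b2 < k then r + b2 else r + b2 - k)" by (rule mod_small2) (use r assms(3) in simp)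
  ultimately show ?thesis using e r assms(2,3) by (simp split: if_splits)
qed

definition colorable :: "'b set \<Rightarrow> ('b \<Rightarrow> 'b \<Rightarrow> bool) \<Rightarrow> nat \<Rightarrow> bool" where
  "colorable X A k \<longleftrightarrow> (\<exists>c :: 'b \<Rightarrow> nat. (\<forall>x\<in>X. c x < k) \<and> (\<forall>x\<in>X. \<forall>y\<in>X. A x y \<longrightarrow> c x \<noteq> c y))"

context fam
begin

lemma H:
  "rotation Gt T T' \<Longrightarrow> search_tree Gt S T \<Longrightarrow> search_tree Gt S T' \<Longrightarrow> S \<subseteq> Vt \<Longrightarrow> tok \<subseteq> S \<Longrightarrow>
   (gp v T = gp v T' \<and> hh v T \<noteq> hh v T') \<or> (rotation E (gp v T) (gp v T') \<and> hh v T = hh v T')"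
proof (induction arbitrary: S rule: rotation.induct)
  case (rot_root x Dx Ch u)
  show ?case by (rule H_root[OF rot_root.hyps rot_root.prems])
next
  case (rot_sub s Ch s' w)
  show ?case by (rule H_sub[OF rot_sub.hyps(1) rot_sub.hyps(2) rot_sub.IH rot_sub.prems])
qed

lemma tokVt: "tok \<subseteq> Vt" unfolding twin_V_def using vV by auto

lemma gp_vertex: "T \<in> rot_vertices Vt Gt \<Longrightarrow> gp v T \<in> rot_vertices V E"
  unfolding rot_vertices_def using G2[of Vt T] tokVt un_image_Vt by simp

lemma upper:
  assumes col: "colorable (rot_vertices V E) (rot_adj E) k" and k3: "3 \<le> k"
  shows "colorable (rot_vertices Vt Gt) (rot_adj Gt) k"
proof -
  obtain c where c1: "\<forall>x\<in>rot_vertices V E. c x < k"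
    and c2: "\<forall>x\<in>rot_vertices V E. \<forall>y\<in>rot_vertices V E. rot_adj E x y \<longrightarrow> c x \<noteq> c y"
    using col unfolding colorable_def by blast
  define c' where "c' T = (c (gp v T) + hh v T) mod k" for T
  have one: "c' T \<noteq> c' T'" if T: "T \<in> rot_vertices Vt Gt" "T' \<in> rot_vertices Vt Gt" and r: "rotation Gt T T'" for T T'
  proof -
    have st: "search_tree Gt Vt T" "search_tree Gt Vt T'" using T unfolding rot_vertices_def by auto
    have gT: "gp v T \<in> rot_vertices V E" "gp v T' \<in> rot_vertices V E" using gp_vertex T by auto
    have hk: "hh v T < k" "hh v T' < k" using hh_le2[of v T] hh_le2[of v T'] k3 by auto
    from H[OF r st(1) st(2) subset_refl tokVt] show ?thesis
    proof
      assume a: "gp v T = gp v T' \<and> hh v T \<noteq> hh v T'"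
      show ?thesis
      proof
        assume "c' T = c' T'"
        then have "(c (gp v T) + hh v T) mod k = (c (gp v T) + hh v T') mod k" using a unfolding c'_def by simp
        then have "hh v T = hh v T'" using mod_add_cancel_lt hk by blast
        then show False using a by simp
      qed
    next
      assume a: "rotation E (gp v T) (gp v T') \<and> hh v T = hh v T'"
      have stg: "search_tree E V (gp v T)" using gT(1) unfolding rot_vertices_def by simp
      have ne: "gp v T \<noteq> gp v T'" using rotation_ne[OF _ stg] a by blast
      have adj: "rot_adj E (gp v T) (gp v T')" unfolding rot_adj_def using ne a by blast
      have cne: "c (gp v T) \<noteq> c (gp v T')" using c2 gT adj by blast
      have ck: "c (gp v T) < k" "c (gp v T') < k" using c1 gT by auto
      show ?thesis
      proof
        assume "c' T = c' T'"
        then have "(hh v T + c (gp v T)) mod k = (hh v T + c (gp v T')) mod k"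
          using a unfolding c'_def by (simp add: add.commute)
        then have "c (gp v T) = c (gp v T')" using mod_add_cancel_lt ck by blast
        then show False using cne by simp
      qed
    qed
  qed
  show ?thesis unfolding colorable_def
  proof (intro exI conjI ballI impI)
    fix x assume "x \<in> rot_vertices Vt Gt"
    show "c' x < k" unfolding c'_def using k3 by simp
  next
    fix x y assume xy: "x \<in> rot_vertices Vt Gt" "y \<in> rot_vertices Vt Gt" "rot_adj Gt x y"
    then have "rotation Gt x y \<or> rotation Gt y x" unfolding rot_adj_def by blast
    then show "c' x \<noteq> c' y" using one[OF xy(1,2)] one[OF xy(2,1)] by metis
  qed
qed

end


lemma ffilter_finsert: "ffilter P (finsert a A) = (if P a then finsert a (ffilter P A) else ffilter P A)"
  by (auto simp: fset_eq_iff)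

lemma ffilter_fempty: "ffilter P {||} = {||}"
  by (auto simp: fset_eq_iff)

primrec chain :: "'a list \<Rightarrow> 'a rtree \<Rightarrow> 'a rtree" where
  "chain [] t = t"
| "chain (w # ws) t = Node w {|chain ws t|}"

lemma chain_rot: "rotation E P P' \<Longrightarrow> rotation E (chain ws P) (chain ws P')"
proof (induction ws)
  case Nil then show ?case by simp
next
  case (Cons w ws)
  have m: "chain ws P |\<in>| {|chain ws P|}" by simp
  have "rotation E (Node w {|chain ws P|}) (Node w (finsert (chain ws P') ({|chain ws P|} |-| {|chain ws P|})))"
    by (rule rotation.rot_sub[OF m Cons.IH[OF Cons.prems]])
  then show ?case by simp
qed

lemma chain_inj: "chain ws P = chain ws P' \<Longrightarrow> P = P'"
  by (induction ws) auto

lemma comps_empty: "comps E {} = {}" unfolding comps_def by simp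

lemma connected_single: "connected_in E {a}"
  unfolding connected_in_def by simp

lemma connected_pair:
  assumes sym: "\<And>x y. E x y \<Longrightarrow> E y x" and e: "E a b"
  shows "connected_in E {a, b}"
proof -
  have ab: "reach_in E {a, b} a b" by (rule reach_in_edge[of E a b]) (use e in auto)
  have ba: "reach_in E {a, b} b a" by (rule reach_in_sym[of E, OF sym ab])
  show ?thesis unfolding connected_in_def using ab ba by auto
qed

lemma st_leaf_intro: "search_tree E {a} (Node a {||})"
  by (rule search_tree.intros) (auto simp: connected_single comps_empty)

lemma st_edge:
  assumes sym: "\<And>x y. E x y \<Longrightarrow> E y x" and e: "E a b" and ab: "a \<noteq> b"
  shows "search_tree E {a, b} (Node a {|Node b {||}|})"
proof (rule search_tree.intros)
  show "a \<in> {a, b}" by simp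
  show "connected_in E {a, b}" by (rule connected_pair[of E, OF sym e])
  show "\<forall>t|\<in>|{|Node b {||}|}. search_tree E (verts t) t" using st_leaf_intro[of E b] by simp
  have "{a, b} - {a} = {b}" using ab by auto
  then show "verts ` fset {|Node b {||}|} = comps E ({a, b} - {a})"
    using comps_conn[OF connected_single[of E b]] by simp
  show "inj_on verts (fset {|Node b {||}|})" by simp
qed

lemma conn_K:
  assumes sym: "\<And>x y. E x y \<Longrightarrow> E y x" and KZ: "K \<subseteq> Z" and cK: "connected_in E K"
    and adj: "\<forall>z\<in>Z. \<exists>k\<in>K. E z k"
  shows "connected_in E Z"
proof -
  have "K \<noteq> {}" using cK unfolding connected_in_def by (rule conjunct1)
  then obtain k0 where k0: "k0 \<in> K" by blast
  have tok0: "reach_in E Z z k0" if "z \<in> Z" for z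
  proof -
    have "\<exists>k\<in>K. E z k" using adj that by (rule bspec)
    then obtain k where k: "k \<in> K" "E z k" by (rule bexE)
    have "reach_in E Z z k" by (rule reach_in_edge[of E z k]) (use k that KZ in auto)
    moreover have "reach_in E Z k k0"
    proof -
      have "\<forall>a\<in>K. \<forall>b\<in>K. reach_in E K a b" using cK unfolding connected_in_def by (rule conjunct2)
      then have "reach_in E K k k0" using k(1) k0 by blast
      then show ?thesis using KZ by (rule reach_in_mono)
    qed
    ultimately show ?thesis by (rule reach_in_trans)
  qed
  show ?thesis unfolding connected_in_def
  proof (intro conjI ballI)
    show "Z \<noteq> {}" using k0 KZ by blast
    fix a b assume "a \<in> Z" "b \<in> Z"
    show "reach_in E Z a b" using tok0[OF \<open>a \<in> Z\<close>] reach_in_sym[of E, OF sym tok0[OF \<open>b \<in> Z\<close>]]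
      by (rule reach_in_trans)
  qed
qed

lemma chain_st:
  assumes sym: "\<And>x y. E x y \<Longrightarrow> E y x" and P: "search_tree E K P"
    and conn: "\<And>Z. K \<subseteq> Z \<Longrightarrow> Z \<subseteq> set ws \<union> K \<Longrightarrow> connected_in E Z"
    and d: "distinct ws" and dis: "set ws \<inter> K = {}"
  shows "search_tree E (set ws \<union> K) (chain ws P)"
  using conn d dis
proof (induction ws)
  case Nil then show ?case using P by simp
next
  case (Cons w ws)
  have IH: "search_tree E (set ws \<union> K) (chain ws P)"
  proof (rule Cons.IH)
    fix Z assume "K \<subseteq> Z" "Z \<subseteq> set ws \<union> K"
    moreover have "set ws \<union> K \<subseteq> set (w # ws) \<union> K" by auto
    ultimately show "connected_in E Z" using Cons.prems(1)[of Z] by blast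
  next
    show "distinct ws" using Cons.prems(2) by simp
  next
    show "set ws \<inter> K = {}" using Cons.prems(3) by auto
  qed
  have cw: "connected_in E (set ws \<union> K)" by (rule Cons.prems(1)) auto
  have e: "set (w # ws) \<union> K - {w} = set ws \<union> K" using Cons.prems(2,3) by auto
  show ?case unfolding chain.simps
  proof (rule search_tree.intros)
    show "w \<in> set (w # ws) \<union> K" by simp
    show "connected_in E (set (w # ws) \<union> K)" by (rule Cons.prems(1)) auto
    show "\<forall>t|\<in>|{|chain ws P|}. search_tree E (verts t) t" using IH st_verts[OF IH] by simp
    show "verts ` fset {|chain ws P|} = comps E (set (w # ws) \<union> K - {w})"
      unfolding e comps_conn[OF cw] using st_verts[OF IH] by simp
    show "inj_on verts (fset {|chain ws P|})" by simp
  qed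
qed

context fam
begin

lemma pentagon:
  assumes xm: "E x m" and my: "E m y" and nxy: "\<not> E x y" and xyne: "x \<noteq> y"
    and xV: "x \<in> V" and mV: "m \<in> V" and yV: "y \<in> V"
    and adj: "\<forall>z\<in>V. E z x \<or> E z m \<or> E z y"
    and col: "colorable (rot_vertices V E) (rot_adj E) k"
  shows "3 \<le> k"
proof -
  have sym: "\<And>a b. E a b \<Longrightarrow> E b a" by (rule E_sym)
  have xmne: "x \<noteq> m" using xm E_irr[of x] by auto
  have myne: "m \<noteq> y" using my E_irr[of m] by auto
  let ?K = "{x, m, y}"
  have KV: "?K \<subseteq> V" using xV mV yV by simp
  have cK: "connected_in E ?K"
  proof (rule conn_K[of E, OF sym, of "{x, m}"])
    show "{x, m} \<subseteq> ?K" by blast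
    show "connected_in E {x, m}" by (rule connected_pair[of E, OF sym xm])
    show "\<forall>z\<in>?K. \<exists>k\<in>{x, m}. E z k" using xm my sym[of x m] sym[of m y] by auto
  qed
  have connZ: "connected_in E Z" if "?K \<subseteq> Z" "Z \<subseteq> V" for Z
  proof (rule conn_K[of E, OF sym that(1) cK])
    show "\<forall>z\<in>Z. \<exists>k\<in>?K. E z k" using adj that(2) by auto
  qed
  obtain ws where ws: "set ws = V - ?K" "distinct ws" using finite_distinct_list[of "V - ?K"] finV by blast
  have VK: "set ws \<union> ?K = V" using ws(1) KV by blast
  have stch: "search_tree E V (chain ws P)" if P: "search_tree E ?K P" for P
  proof -
    have "search_tree E (set ws \<union> ?K) (chain ws P)"
    proof (rule chain_st[of E, OF sym P _ ws(2)])
      fix Z assume "?K \<subseteq> Z" "Z \<subseteq> set ws \<union> ?K"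
      then show "connected_in E Z" using connZ VK by blast
    next
      show "set ws \<inter> ?K = {}" using ws(1) by blast
    qed
    then show ?thesis using VK by simp
  qed
  define P1 where "P1 = Node m {|Node x {||}, Node y {||}|}"
  define P2 where "P2 = Node x {|Node m {|Node y {||}|}|}"
  define P3 where "P3 = Node x {|Node y {|Node m {||}|}|}"
  define P4 where "P4 = Node y {|Node x {|Node m {||}|}|}"
  define P5 where "P5 = Node y {|Node m {|Node x {||}|}|}"
  have Km: "?K - {m} = {x, y}" using xmne myne by auto
  have Kx: "?K - {x} = {m, y}" using xmne xyne by auto
  have Ky: "?K - {y} = {x, m}" using myne xyne by auto
  have st1: "search_tree E ?K P1" unfolding P1_def
  proof (rule search_tree.intros)
    show "m \<in> ?K" by simp
    show "connected_in E ?K" by (rule cK)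
    show "\<forall>t|\<in>|{|Node x {||}, Node y {||}|}. search_tree E (verts t) t"
      using st_leaf_intro[of E x] st_leaf_intro[of E y] by simp
    have iso: "\<forall>w\<in>{x, y}. \<not> E x w" using nxy E_irr[of x] by auto
    have "comps E {x, y} = insert {x} (comps E ({x, y} - {x}))" by (rule comps_isolated[of E "{x, y}" x, OF sym iso insertI1])
    also have "{x, y} - {x} = {y}" using xyne by auto
    finally have "comps E {x, y} = {{x}, {y}}" using comps_conn[OF connected_single[of E y]] by simp
    then show "verts ` fset {|Node x {||}, Node y {||}|} = comps E (?K - {m})" unfolding Km by auto
    show "inj_on verts (fset {|Node x {||}, Node y {||}|})" using xyne by (auto simp: inj_on_def)
  qed
  have st2: "search_tree E ?K P2" unfolding P2_def
  proof (rule search_tree.intros)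
    show "x \<in> ?K" by simp
    show "connected_in E ?K" by (rule cK)
    show "\<forall>t|\<in>|{|Node m {|Node y {||}|}|}. search_tree E (verts t) t" using st_edge[of E, OF sym my myne] by simp
    show "verts ` fset {|Node m {|Node y {||}|}|} = comps E (?K - {x})"
      using comps_conn[OF connected_pair[of E, OF sym my]] Kx by (simp add: insert_commute)
    show "inj_on verts (fset {|Node m {|Node y {||}|}|})" by simp
  qed
  have ym: "E y m" using sym[OF my] .
  have mx: "E m x" using sym[OF xm] .
  have st3: "search_tree E ?K P3" unfolding P3_def
  proof (rule search_tree.intros)
    show "x \<in> ?K" by simp
    show "connected_in E ?K" by (rule cK)
    show "\<forall>t|\<in>|{|Node y {|Node m {||}|}|}. search_tree E (verts t) t"
      using st_edge[of E, OF sym ym myne[symmetric]] by (simp add: insert_commute)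
    show "verts ` fset {|Node y {|Node m {||}|}|} = comps E (?K - {x})"
      using comps_conn[OF connected_pair[of E, OF sym my]] Kx by (simp add: insert_commute)
    show "inj_on verts (fset {|Node y {|Node m {||}|}|})" by simp
  qed
  have st4: "search_tree E ?K P4" unfolding P4_def
  proof (rule search_tree.intros)
    show "y \<in> ?K" by simp
    show "connected_in E ?K" by (rule cK)
    show "\<forall>t|\<in>|{|Node x {|Node m {||}|}|}. search_tree E (verts t) t" using st_edge[of E, OF sym xm xmne] by simp
    show "verts ` fset {|Node x {|Node m {||}|}|} = comps E (?K - {y})"
      using comps_conn[OF connected_pair[of E, OF sym xm]] Ky by (simp add: insert_commute)
    show "inj_on verts (fset {|Node x {|Node m {||}|}|})" by simp
  qed
  have st5: "search_tree E ?K P5" unfolding P5_def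
  proof (rule search_tree.intros)
    show "y \<in> ?K" by simp
    show "connected_in E ?K" by (rule cK)
    show "\<forall>t|\<in>|{|Node m {|Node x {||}|}|}. search_tree E (verts t) t"
      using st_edge[of E, OF sym mx xmne[symmetric]] by (simp add: insert_commute)
    show "verts ` fset {|Node m {|Node x {||}|}|} = comps E (?K - {y})"
      using comps_conn[OF connected_pair[of E, OF sym xm]] Ky by (simp add: insert_commute)
    show "inj_on verts (fset {|Node m {|Node x {||}|}|})" by simp
  qed
  have nyx: "\<not> E y x" using nxy sym[of y x] by auto
  have r21: "rotation E P2 P1"
  proof -
    have m: "Node m {|Node y {||}|} |\<in>| {|Node m {|Node y {||}|}|}" by simp
    have "rotation E P2 (Node m (finsert (Node x (({|Node m {|Node y {||}|}|} |-| {|Node m {|Node y {||}|}|})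
       |\<union>| ffilter (\<lambda>S. adj_set E x (verts S)) {|Node y {||}|})) (ffilter (\<lambda>S. \<not> adj_set E x (verts S)) {|Node y {||}|})))"
      unfolding P2_def by (rule rotation.rot_root[OF m])
    then show ?thesis unfolding P1_def using nxy by (simp add: ffilter_finsert ffilter_fempty adj_set_def)
  qed
  have r23: "rotation E P2 P3"
  proof -
    have m0: "Node y {||} |\<in>| {|Node y {||}|}" by simp
    have "rotation E (Node m {|Node y {||}|}) (Node y (finsert (Node m (({|Node y {||}|} |-| {|Node y {||}|})
       |\<union>| ffilter (\<lambda>S. adj_set E m (verts S)) {||})) (ffilter (\<lambda>S. \<not> adj_set E m (verts S)) {||})))"
      by (rule rotation.rot_root[OF m0])
    then have r0: "rotation E (Node m {|Node y {||}|}) (Node y {|Node m {||}|})" by (simp add: ffilter_fempty)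
    have m: "Node m {|Node y {||}|} |\<in>| {|Node m {|Node y {||}|}|}" by simp
    have "rotation E P2 (Node x (finsert (Node y {|Node m {||}|}) ({|Node m {|Node y {||}|}|} |-| {|Node m {|Node y {||}|}|})))"
      unfolding P2_def by (rule rotation.rot_sub[OF m r0])
    then show ?thesis unfolding P3_def by simp
  qed
  have r34: "rotation E P3 P4"
  proof -
    have m: "Node y {|Node m {||}|} |\<in>| {|Node y {|Node m {||}|}|}" by simp
    have "rotation E P3 (Node y (finsert (Node x (({|Node y {|Node m {||}|}|} |-| {|Node y {|Node m {||}|}|})
       |\<union>| ffilter (\<lambda>S. adj_set E x (verts S)) {|Node m {||}|})) (ffilter (\<lambda>S. \<not> adj_set E x (verts S)) {|Node m {||}|})))"
      unfolding P3_def by (rule rotation.rot_root[OF m])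
    then show ?thesis unfolding P4_def using xm by (simp add: ffilter_finsert ffilter_fempty adj_set_def)
  qed
  have r45: "rotation E P4 P5"
  proof -
    have m0: "Node m {||} |\<in>| {|Node m {||}|}" by simp
    have "rotation E (Node x {|Node m {||}|}) (Node m (finsert (Node x (({|Node m {||}|} |-| {|Node m {||}|})
       |\<union>| ffilter (\<lambda>S. adj_set E x (verts S)) {||})) (ffilter (\<lambda>S. \<not> adj_set E x (verts S)) {||})))"
      by (rule rotation.rot_root[OF m0])
    then have r0: "rotation E (Node x {|Node m {||}|}) (Node m {|Node x {||}|})" by (simp add: ffilter_fempty)
    have m: "Node x {|Node m {||}|} |\<in>| {|Node x {|Node m {||}|}|}" by simp
    have "rotation E P4 (Node y (finsert (Node m {|Node x {||}|}) ({|Node x {|Node m {||}|}|} |-| {|Node x {|Node m {||}|}|})))"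
      unfolding P4_def by (rule rotation.rot_sub[OF m r0])
    then show ?thesis unfolding P5_def by simp
  qed
  have r51: "rotation E P5 P1"
  proof -
    have m: "Node m {|Node x {||}|} |\<in>| {|Node m {|Node x {||}|}|}" by simp
    have "rotation E P5 (Node m (finsert (Node y (({|Node m {|Node x {||}|}|} |-| {|Node m {|Node x {||}|}|})
       |\<union>| ffilter (\<lambda>S. adj_set E y (verts S)) {|Node x {||}|})) (ffilter (\<lambda>S. \<not> adj_set E y (verts S)) {|Node x {||}|})))"
      unfolding P5_def by (rule rotation.rot_root[OF m])
    then show ?thesis unfolding P1_def using nyx by (simp add: ffilter_finsert ffilter_fempty adj_set_def finsert_commute)
  qed
  have n12: "P1 \<noteq> P2" unfolding P1_def P2_def using xmne by simp
  have n23: "P2 \<noteq> P3" unfolding P2_def P3_def using myne by simp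
  have n34: "P3 \<noteq> P4" unfolding P3_def P4_def using xyne by simp
  have n45: "P4 \<noteq> P5" unfolding P4_def P5_def using xmne by simp
  have n51: "P5 \<noteq> P1" unfolding P5_def P1_def using myne by simp
  define T1 where "T1 = chain ws P1"
  define T2 where "T2 = chain ws P2"
  define T3 where "T3 = chain ws P3"
  define T4 where "T4 = chain ws P4"
  define T5 where "T5 = chain ws P5"
  have V1': "T1 \<in> rot_vertices V E" "T2 \<in> rot_vertices V E" "T3 \<in> rot_vertices V E"
    "T4 \<in> rot_vertices V E" "T5 \<in> rot_vertices V E"
    unfolding rot_vertices_def T1_def T2_def T3_def T4_def T5_def
    using stch[OF st1] stch[OF st2] stch[OF st3] stch[OF st4] stch[OF st5] by auto
  have a12: "rot_adj E T1 T2" unfolding rot_adj_def T1_def T2_def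
    using chain_rot[OF r21] chain_inj n12 by metis
  have a23: "rot_adj E T2 T3" unfolding rot_adj_def T2_def T3_def
    using chain_rot[OF r23] chain_inj n23 by metis
  have a34: "rot_adj E T3 T4" unfolding rot_adj_def T3_def T4_def
    using chain_rot[OF r34] chain_inj n34 by metis
  have a45: "rot_adj E T4 T5" unfolding rot_adj_def T4_def T5_def
    using chain_rot[OF r45] chain_inj n45 by metis
  have a51: "rot_adj E T5 T1" unfolding rot_adj_def T5_def T1_def
    using chain_rot[OF r51] chain_inj n51 by metis
  obtain c where c1: "\<forall>x\<in>rot_vertices V E. c x < k"
    and c2: "\<forall>x\<in>rot_vertices V E. \<forall>y\<in>rot_vertices V E. rot_adj E x y \<longrightarrow> c x \<noteq> c y"
    using col unfolding colorable_def by blast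
  have "c T1 \<noteq> c T2" "c T2 \<noteq> c T3" "c T3 \<noteq> c T4" "c T4 \<noteq> c T5" "c T5 \<noteq> c T1"
    using c2 V1' a12 a23 a34 a45 a51 by blast+
  moreover have "c T1 < k" "c T2 < k" "c T3 < k" "c T4 < k" "c T5 < k" using c1 V1' by blast+
  ultimately show ?thesis by linarith
qed

end


context fam
begin

lemma compat_Some: "\<And>a b. E a b = Gt (Some a) (Some b)"
  unfolding twin_E_def by simp

definition emb :: "'a rtree \<Rightarrow> 'a option rtree" where
  "emb T = Node None {|map_rtree Some T|}"

lemma Vt_None: "Vt - {None} = Some ` V" unfolding twin_V_def by auto

lemma emb_st: assumes st: "search_tree E V T" shows "search_tree Gt Vt (emb T)"
  unfolding emb_def
proof (rule search_tree.intros)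
  show "None \<in> Vt" unfolding twin_V_def by simp
  obtain b0 where b0: "b0 \<in> V2" using ne2 by blast
  have b0B: "Some b0 \<in> Bb" unfolding Bb_def using b0 by simp
  have b0V: "Some b0 \<in> Vt" unfolding twin_V_def using b0 V2V by auto
  show "connected_in Gt Vt"
    by (rule conn_AB[of Vt None "Some b0"]) (use tok_A(1) b0B b0V in \<open>auto simp: twin_V_def\<close>)
  have stm: "search_tree Gt (Some ` V) (map_rtree Some T)"
    by (rule st_map[of E Gt Some, OF compat_Some st]) simp
  show "\<forall>t|\<in>|{|map_rtree Some T|}. search_tree Gt (verts t) t"
    using stm st_verts[OF stm] by simp
  have cS: "connected_in Gt (Some ` V)" by (rule connected_image[of E Gt Some, OF compat_Some connV])
  show "verts ` fset {|map_rtree Some T|} = comps Gt (Vt - {None})"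
    unfolding Vt_None comps_conn[OF cS] using st_verts[OF stm] by simp
  show "inj_on verts (fset {|map_rtree Some T|})" by simp
qed

lemma emb_rot:
  assumes r: "rotation E T T'" and st: "search_tree E V T"
  shows "rotation Gt (emb T) (emb T')"
proof -
  have r1: "rotation Gt (map_rtree Some T) (map_rtree Some T')"
    by (rule rot_map[of E Gt Some, OF compat_Some r st]) simp
  have m: "map_rtree Some T |\<in>| {|map_rtree Some T|}" by simp
  have "rotation Gt (Node None {|map_rtree Some T|})
      (Node None (finsert (map_rtree Some T') ({|map_rtree Some T|} |-| {|map_rtree Some T|})))"
    by (rule rotation.rot_sub[OF m r1])
  then show ?thesis unfolding emb_def by simp
qed

lemma emb_inj: assumes "emb T = emb T'" shows "T = T'"
proof -
  have e: "map_rtree Some T = map_rtree Some T'" using assms unfolding emb_def by simp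
  have i: "inj (map_rtree Some)" by (rule rtree.inj_map) (simp add: inj_def)
  show ?thesis by (rule injD[OF i e])
qed

lemma lower:
  assumes col: "colorable (rot_vertices Vt Gt) (rot_adj Gt) k"
  shows "colorable (rot_vertices V E) (rot_adj E) k"
proof -
  obtain c where c1: "\<forall>x\<in>rot_vertices Vt Gt. c x < k"
    and c2: "\<forall>x\<in>rot_vertices Vt Gt. \<forall>y\<in>rot_vertices Vt Gt. rot_adj Gt x y \<longrightarrow> c x \<noteq> c y"
    using col unfolding colorable_def by blast
  have ev: "emb T \<in> rot_vertices Vt Gt" if "T \<in> rot_vertices V E" for T
    using emb_st that unfolding rot_vertices_def by simp
  show ?thesis unfolding colorable_def
  proof (intro exI conjI ballI impI)
    fix x assume "x \<in> rot_vertices V E"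
    then show "(c \<circ> emb) x < k" using c1 ev by simp
  next
    fix x y assume xy: "x \<in> rot_vertices V E" "y \<in> rot_vertices V E" "rot_adj E x y"
    have stx: "search_tree E V x" and sty: "search_tree E V y" using xy(1,2) unfolding rot_vertices_def by auto
    have ne: "emb x \<noteq> emb y" using xy(3) emb_inj unfolding rot_adj_def by metis
    have "rotation E x y \<or> rotation E y x" using xy(3) unfolding rot_adj_def by simp
    then have "rotation Gt (emb x) (emb y) \<or> rotation Gt (emb y) (emb x)"
      using emb_rot stx sty by blast
    then have "rot_adj Gt (emb x) (emb y)" unfolding rot_adj_def using ne by simp
    then show "(c \<circ> emb) x \<noteq> (c \<circ> emb) y" using c2 ev xy(1,2) by simp
  qed
qed

lemma three:
  assumes nc: "\<exists>x\<in>V. \<exists>y\<in>V. x \<noteq> y \<and> \<not> E x y"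
    and col: "colorable (rot_vertices V E) (rot_adj E) k"
  shows "3 \<le> k"
proof -
  obtain x y where xy: "x \<in> V" "y \<in> V" "x \<noteq> y" "\<not> E x y" using nc by blast
  have VV: "z \<in> V1 \<or> z \<in> V2" if "z \<in> V" for z using that part1 by blast
  show ?thesis
  proof (cases "x \<in> V1")
    case x1: True
    show ?thesis
    proof (cases "y \<in> V1")
      case y1: True
      obtain b0 where b0: "b0 \<in> V2" using ne2 by blast
      have b0V: "b0 \<in> V" using b0 V2V by blast
      have xb: "E x b0" using E_V1[OF x1 b0V] b0 by simp
      have by': "E b0 y" using E_V1[OF y1 b0V] b0 E_sym by blast
      have adj: "\<forall>z\<in>V. E z x \<or> E z b0 \<or> E z y"
      proof
        fix z assume z: "z \<in> V"
        show "E z x \<or> E z b0 \<or> E z y"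
        proof (cases "z \<in> V1")
          case True then show ?thesis using E_V1[OF True b0V] b0 by simp
        next
          case False
          then have "z \<in> V2" using VV z by blast
          then have "E x z" using E_V1[OF x1 z] by simp
          then show ?thesis using E_sym by blast
        qed
      qed
      show ?thesis by (rule pentagon[OF xb by' xy(4) xy(3) xy(1) b0V xy(2) adj col])
    next
      case False
      then have "y \<in> V2" using VV xy(2) by blast
      then have "E x y" using E_V1[OF x1 xy(2)] by simp
      then show ?thesis using xy(4) by simp
    qed
  next
    case x2: False
    then have x2: "x \<in> V2" using VV xy(1) by blast
    show ?thesis
    proof (cases "y \<in> V1")
      case y1: True
      then have "E y x" using E_V1[OF y1 xy(1)] x2 by simp
      then show ?thesis using xy(4) E_sym by blast
    next
      case False
      then have y2: "y \<in> V2" using VV xy(2) by blast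
      have xv: "E x v" using E_V1[OF vV1 xy(1)] x2 E_sym by blast
      have vy: "E v y" using E_V1[OF vV1 xy(2)] y2 by simp
      have adj: "\<forall>z\<in>V. E z x \<or> E z v \<or> E z y"
      proof
        fix z assume z: "z \<in> V"
        show "E z x \<or> E z v \<or> E z y"
        proof (cases "z \<in> V1")
          case True then show ?thesis using E_V1[OF True xy(1)] x2 by simp
        next
          case False
          then have "z \<in> V2" using VV z by blast
          then have "E v z" using E_V1[OF vV1 z] by simp
          then show ?thesis using E_sym by blast
        qed
      qed
      show ?thesis by (rule pentagon[OF xv vy xy(4) xy(3) xy(1) vV xy(2) adj col])
    qed
  qed
qed

lemma chrom_eq:
  assumes nc: "\<exists>x\<in>V. \<exists>y\<in>V. x \<noteq> y \<and> \<not> E x y"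
  shows "chromatic_number (rot_vertices Vt Gt) (rot_adj Gt) = chromatic_number (rot_vertices V E) (rot_adj E)"
proof -
  have P: "colorable (rot_vertices Vt Gt) (rot_adj Gt) k = colorable (rot_vertices V E) (rot_adj E) k" for k
  proof
    assume "colorable (rot_vertices Vt Gt) (rot_adj Gt) k"
    then show "colorable (rot_vertices V E) (rot_adj E) k" by (rule lower)
  next
    assume col: "colorable (rot_vertices V E) (rot_adj E) k"
    show "colorable (rot_vertices Vt Gt) (rot_adj Gt) k" by (rule upper[OF col three[OF nc col]])
  qed
  have e1: "chromatic_number X A = (LEAST k. colorable X A k)" for X :: "'b set" and A
    unfolding chromatic_number_def colorable_def ..
  show ?thesis unfolding e1 P ..
qed

end



theorem proposition3p7:
  fixes V :: "'a set" and E :: "'a \<Rightarrow> 'a \<Rightarrow> bool" and V1 V2 :: "'a set" and v :: 'a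
  assumes "simple_graph V E"
    and "connected_in E V"
    and "\<exists>x\<in>V. \<exists>y\<in>V. x \<noteq> y \<and> \<not> E x y"
    and "V1 \<union> V2 = V" and "V1 \<inter> V2 = {}" and "V1 \<noteq> {}" and "V2 \<noteq> {}"
    and "\<forall>u\<in>V1. nbhd V E u = V2"
    and "v \<in> V1"
  shows "chromatic_number (rot_vertices (twin_V V) (twin_E E v)) (rot_adj (twin_E E v))
       = chromatic_number (rot_vertices V E) (rot_adj E)"
proof -
  interpret fam V E V1 V2 v
    by (rule fam.intro) (fact assms(1), fact assms(2), fact assms(4), fact assms(5), fact assms(7),
        fact assms(8), fact assms(9))
  show ?thesis by (rule chrom_eq[OF assms(3)])
qed

end
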